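(* Assume (A1) and (A2), and let $\mu\in X$ be a mixed stationary Nash equilibrium of the mean field game. Then for every $\epsilon>0$ there exists $N_\epsilon\in\mathbb N$ such that for every $N>N_\epsilon$, every collection of deterministic policies $\{u^i\}_{i\in[N]}$ ($u^i\in\mathcal U^{c^i}_D$) of a population of $N$ players satisfying $$\Big|\tfrac1N\textstyle\sum_{i\in\mathcal C_c}\delta_{u^i}(u)-\mu^c[\mathcal S^c,u]\Big|<\tfrac1N\quad\text{for all }c\in[C],\ u\in\mathcal U^c_D$$ is a weak $\epsilon$-MSNE of the $N$-player game, i.e., for all $i\in[N]$ and all $v^i\in\mathcal U^{c^i}_D$, $$J^{i,N}(u^1,\dots,u^i,\dots,u^N)\ge J^{i,N}(u^1,\dots,v^i,\dots,u^N)-\epsilon.$$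
   Context: Model: classes $c\in[C]$ with masses $m^c>0$, finite state sets $\mathcal S^c$, nonempty finite admissible action sets $\mathcal A^c(s)$ ($\mathcal A^c=\bigcup_s\mathcal A^c(s)$), transition kernels $\phi^c(\cdot\mid s,a)\in\mathcal P(\mathcal S^c)$, rates $\lambda^c>0$; $p=\sum_c|\mathcal S^c|,q=\sum_c|\mathcal A^c|$. $\mathcal U^c_D$ = deterministic policies (maps $s\mapsto u(s)\in\mathcal A^c(s)$; $u(a\mid s)=\mathbf 1[a=u(s)]$). $\phi^{c,u}_{ss'}=\phi^c(s\mid s',u(s'))$. (A2): for all $c,u\in\mathcal U^c_D$, $\phi^{c,u}$ has exactly one recurrent communicating class; $\eta^{c,u}$ is the unique stationary distribution of the continuous-time chain with generator $\lambda^c(\phi^{c,u}-I)$. $X=\prod_c\{\mu^c\in\mathbb R_{\ge0}^{\mathcal S^c\times\mathcal U^c_D}:\sum\mu^c=m^c\}$, $X_{\mathcal S\times\mathcal A}=\prod_c\{\nu\in\mathbb R_{\ge0}^{\mathcal S^c\times\mathcal A^c}:\sum\nu=m^c\}$; $\mu^c_{\mathcal S\times\mathcal A}[s,a]=\sum_u\mu^c[s,u]u(a\mid s)$; $\mu^c[\mathcal S^c,u]=\sum_s\mu^c[s,u]$. Rewards $r^c:\mathcal S^c\times\mathcal A^c\times X_{\mathcal S\times\mathcal A}\to\mathbb R$; (A1): each $r^c(s,a,\cdot)$ extends to $\mathbb R^{pq}_{\ge0}$ with an extension continuously differentiable on $X_{\mathcal S\times\mathcal A}$. $F^c_u(\mu)=\sum_{s}\sum_{a\in\mathcal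 A^c(s)}\eta^{c,u}(s)u(a\mid s)r^c(s,a,\mu_{\mathcal S\times\mathcal A})$. MSNE: $\mu\in X$ with, for all $c,u$: (i) $\mu^c[\mathcal S^c,u]>0\Rightarrow F^c_u(\mu)\ge F^c_v(\mu)\ \forall v\in\mathcal U^c_D$; (ii) $\mu^c[s,u]=\eta^{c,u}(s)\mu^c[\mathcal S^c,u]$ for all $s$. $N$-player game: player $i$ belongs to class $c^i$, $\mathcal C_c=\{i:c^i=c\}$, $|\mathcal C_c|/N=m^c$; each player $i\in\mathcal C_c$ has an independent Poisson clock of rate $\lambda^c$ with ring times $t^i_1<t^i_2<\dots$; at a ring, a player in state $s$ with policy $u^i$ takes action $a^i=u^i(s)$ and moves to a state drawn from $\phi^c(\cdot\mid s,a^i)$. $s^i(t)$ is its state; $\hat\mu^c_{\mathcal S\times\mathcal A}[s,a](t)=\frac1N\sum_{j\in\mathcal C_c}\delta_{s^j(t)}(s)\delta_{a^j(t)}(a)$ with $a^j(t)=u^j(s^j(t))$. The payoff is $J^{i,N}(u^1,\dots,u^N)=\lim_{T\to\infty}\frac1T\mathbb E\big[\sum_{k=1}^Tr^{c^i}(s^i(t^i_k),a^i(t^i_k),\hat\mu_{\mathcal S\times\mathcal A}(t^i_k))\big]$. *)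

theory Defs
  imports "HOL-Probability.Probability"
begin

text \<open>Model data (all parameters passed explicitly):
  S c = state set of class c, A c s = admissible actions, phi c s a = transition kernel,
  lam c = clock rate, m c = mass, r c s a nu = reward.\<close>

definition Acl :: "('c \<Rightarrow> 's set) \<Rightarrow> ('c \<Rightarrow> 's \<Rightarrow> 'a set) \<Rightarrow> 'c \<Rightarrow> 'a set" where
  "Acl S A c = (\<Union>s\<in>S c. A c s)"

definition UD :: "('c \<Rightarrow> 's set) \<Rightarrow> ('c \<Rightarrow> 's \<Rightarrow> 'a set) \<Rightarrow> 'c \<Rightarrow> ('s \<Rightarrow> 'a) set" where
  "UD S A c = PiE (S c) (A c)"

text \<open>Stationary distributions of the CTMC with generator lam c (phi^{c,u} - I).\<close>
definition stationary_dist ::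
  "('c \<Rightarrow> 's set) \<Rightarrow> ('c \<Rightarrow> 's \<Rightarrow> 'a \<Rightarrow> 's pmf) \<Rightarrow> ('c \<Rightarrow> real) \<Rightarrow> 'c \<Rightarrow> ('s \<Rightarrow> 'a) \<Rightarrow> ('s \<Rightarrow> real) \<Rightarrow> bool" where
  "stationary_dist S phi lam c u \<eta> \<longleftrightarrow>
     (\<forall>s. 0 \<le> \<eta> s) \<and> (\<forall>s. s \<notin> S c \<longrightarrow> \<eta> s = 0) \<and> sum \<eta> (S c) = 1 \<and>
     (\<forall>s\<in>S c. (\<Sum>s'\<in>S c. \<eta> s' * (lam c * (pmf (phi c s' (u s')) s - (if s' = s then 1 else 0)))) = 0)"

definition eta ::
  "('c \<Rightarrow> 's set) \<Rightarrow> ('c \<Rightarrow> 's \<Rightarrow> 'a \<Rightarrow> 's pmf) \<Rightarrow> ('c \<Rightarrow> real) \<Rightarrow> 'c \<Rightarrow> ('s \<Rightarrow> 'a) \<Rightarrow> 's \<Rightarrow> real" where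
  "eta S phi lam c u = (THE \<eta>. stationary_dist S phi lam c u \<eta>)"

definition step_rel :: "('c \<Rightarrow> 's set) \<Rightarrow> ('c \<Rightarrow> 's \<Rightarrow> 'a \<Rightarrow> 's pmf) \<Rightarrow> 'c \<Rightarrow> ('s \<Rightarrow> 'a) \<Rightarrow> ('s \<times> 's) set" where
  "step_rel S phi c u = {(s, s'). s \<in> S c \<and> 0 < pmf (phi c s (u s)) s'}"

text \<open>Recurrent communicating class of a finite chain = closed communicating class.\<close>
definition recurrent_class :: "('c \<Rightarrow> 's set) \<Rightarrow> ('c \<Rightarrow> 's \<Rightarrow> 'a \<Rightarrow> 's pmf) \<Rightarrow> 'c \<Rightarrow> ('s \<Rightarrow> 'a) \<Rightarrow> 's set \<Rightarrow> bool" where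
  "recurrent_class S phi c u R \<longleftrightarrow> R \<noteq> {} \<and> R \<subseteq> S c \<and>
     (\<forall>s\<in>R. \<forall>s'. (s, s') \<in> (step_rel S phi c u)\<^sup>* \<longrightarrow> s' \<in> R) \<and>
     (\<forall>s\<in>R. \<forall>s'\<in>R. (s, s') \<in> (step_rel S phi c u)\<^sup>*)"

definition assumption_A2 :: "('c \<Rightarrow> 's set) \<Rightarrow> ('c \<Rightarrow> 's \<Rightarrow> 'a set) \<Rightarrow> ('c \<Rightarrow> 's \<Rightarrow> 'a \<Rightarrow> 's pmf) \<Rightarrow> bool" where
  "assumption_A2 S A phi \<longleftrightarrow> (\<forall>c. \<forall>u\<in>UD S A c. \<exists>!R. recurrent_class S phi c u R)"

definition Xset :: "('c \<Rightarrow> 's set) \<Rightarrow> ('c \<Rightarrow> 's \<Rightarrow> 'a set) \<Rightarrow> ('c \<Rightarrow> real) \<Rightarrow> ('c \<Rightarrow> 's \<Rightarrow> ('s \<Rightarrow> 'a) \<Rightarrow> real) set" where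
  "Xset S A m = {\<mu>. \<forall>c. (\<forall>s u. 0 \<le> \<mu> c s u) \<and> (\<forall>s u. (s \<notin> S c \<or> u \<notin> UD S A c) \<longrightarrow> \<mu> c s u = 0) \<and>
      (\<Sum>s\<in>S c. \<Sum>u\<in>UD S A c. \<mu> c s u) = m c}"

definition XSA :: "('c \<Rightarrow> 's set) \<Rightarrow> ('c \<Rightarrow> 's \<Rightarrow> 'a set) \<Rightarrow> ('c \<Rightarrow> real) \<Rightarrow> ('c \<Rightarrow> 's \<Rightarrow> 'a \<Rightarrow> real) set" where
  "XSA S A m = {\<nu>. \<forall>c. (\<forall>s a. 0 \<le> \<nu> c s a) \<and> (\<forall>s a. (s \<notin> S c \<or> a \<notin> Acl S A c) \<longrightarrow> \<nu> c s a = 0) \<and>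
      (\<Sum>s\<in>S c. \<Sum>a\<in>Acl S A c. \<nu> c s a) = m c}"

definition muSA :: "('c \<Rightarrow> 's set) \<Rightarrow> ('c \<Rightarrow> 's \<Rightarrow> 'a set) \<Rightarrow> ('c \<Rightarrow> 's \<Rightarrow> ('s \<Rightarrow> 'a) \<Rightarrow> real) \<Rightarrow> 'c \<Rightarrow> 's \<Rightarrow> 'a \<Rightarrow> real" where
  "muSA S A \<mu> c s a = (\<Sum>u\<in>UD S A c. \<mu> c s u * (if u s = a then 1 else 0))"

definition mass :: "('c \<Rightarrow> 's set) \<Rightarrow> ('c \<Rightarrow> 's \<Rightarrow> ('s \<Rightarrow> 'a) \<Rightarrow> real) \<Rightarrow> 'c \<Rightarrow> ('s \<Rightarrow> 'a) \<Rightarrow> real" where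
  "mass S \<mu> c u = (\<Sum>s\<in>S c. \<mu> c s u)"

definition vecSA :: "('c \<Rightarrow> 's \<Rightarrow> 'a \<Rightarrow> real) \<Rightarrow> real ^ ('c::finite \<times> 's::finite \<times> 'a::finite)" where
  "vecSA \<nu> = (\<chi> k. \<nu> (fst k) (fst (snd k)) (snd (snd k)))"

definition assumption_A1 ::
  "('c::finite \<Rightarrow> 's::finite set) \<Rightarrow> ('c \<Rightarrow> 's \<Rightarrow> 'a::finite set) \<Rightarrow> ('c \<Rightarrow> real) \<Rightarrow>
   ('c \<Rightarrow> 's \<Rightarrow> 'a \<Rightarrow> ('c \<Rightarrow> 's \<Rightarrow> 'a \<Rightarrow> real) \<Rightarrow> real) \<Rightarrow> bool" where
  "assumption_A1 S A m r \<longleftrightarrow>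
    (\<forall>c. \<forall>s\<in>S c. \<forall>a\<in>Acl S A c.
       \<exists>(g :: real ^ ('c \<times> 's \<times> 'a) \<Rightarrow> real) g'.
         (\<forall>\<nu>\<in>XSA S A m. g (vecSA \<nu>) = r c s a \<nu>) \<and>
         (\<forall>\<nu>\<in>XSA S A m. (g has_derivative (\<lambda>h. g' (vecSA \<nu>) \<bullet> h))
                            (at (vecSA \<nu>) within {x. \<forall>k. 0 \<le> x $ k})) \<and>
         continuous_on (vecSA ` XSA S A m) g')"

definition Fval ::
  "('c \<Rightarrow> 's set) \<Rightarrow> ('c \<Rightarrow> 's \<Rightarrow> 'a set) \<Rightarrow> ('c \<Rightarrow> 's \<Rightarrow> 'a \<Rightarrow> 's pmf) \<Rightarrow> ('c \<Rightarrow> real) \<Rightarrow>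
   ('c \<Rightarrow> 's \<Rightarrow> 'a \<Rightarrow> ('c \<Rightarrow> 's \<Rightarrow> 'a \<Rightarrow> real) \<Rightarrow> real) \<Rightarrow> 'c \<Rightarrow> ('s \<Rightarrow> 'a) \<Rightarrow>
   ('c \<Rightarrow> 's \<Rightarrow> ('s \<Rightarrow> 'a) \<Rightarrow> real) \<Rightarrow> real" where
  "Fval S A phi lam r c u \<mu> =
     (\<Sum>s\<in>S c. \<Sum>a\<in>A c s. eta S phi lam c u s * (if a = u s then 1 else 0) * r c s a (muSA S A \<mu>))"

definition MSNE ::
  "('c \<Rightarrow> 's set) \<Rightarrow> ('c \<Rightarrow> 's \<Rightarrow> 'a set) \<Rightarrow> ('c \<Rightarrow> 's \<Rightarrow> 'a \<Rightarrow> 's pmf) \<Rightarrow> ('c \<Rightarrow> real) \<Rightarrow> ('c \<Rightarrow> real) \<Rightarrow>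
   ('c \<Rightarrow> 's \<Rightarrow> 'a \<Rightarrow> ('c \<Rightarrow> 's \<Rightarrow> 'a \<Rightarrow> real) \<Rightarrow> real) \<Rightarrow> ('c \<Rightarrow> 's \<Rightarrow> ('s \<Rightarrow> 'a) \<Rightarrow> real) \<Rightarrow> bool" where
  "MSNE S A phi lam m r \<mu> \<longleftrightarrow> \<mu> \<in> Xset S A m \<and>
     (\<forall>c. \<forall>u\<in>UD S A c.
        (0 < mass S \<mu> c u \<longrightarrow> (\<forall>v\<in>UD S A c. Fval S A phi lam r c u \<mu> \<ge> Fval S A phi lam r c v \<mu>)) \<and>
        (\<forall>s\<in>S c. \<mu> c s u = eta S phi lam c u s * mass S \<mu> c u))"

section \<open>N-player game (players 0..<N, class map cl, policy profile p)\<close>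

definition emp :: "nat \<Rightarrow> (nat \<Rightarrow> 'c) \<Rightarrow> (nat \<Rightarrow> 's \<Rightarrow> 'a) \<Rightarrow> (nat \<Rightarrow> 's) \<Rightarrow> 'c \<Rightarrow> 's \<Rightarrow> 'a \<Rightarrow> real" where
  "emp N cl p x c s a = real (card {j. j < N \<and> cl j = c \<and> x j = s \<and> p j (x j) = a}) / real N"

text \<open>Superposition of the independent Poisson clocks: the next ringing clock belongs to
  player j with probability lam(c^j) / sum_l lam(c^l).\<close>
definition sel :: "nat \<Rightarrow> (nat \<Rightarrow> 'c) \<Rightarrow> ('c \<Rightarrow> real) \<Rightarrow> nat pmf" where
  "sel N cl lam = embed_pmf (\<lambda>j. if j < N then lam (cl j) / (\<Sum>l<N. lam (cl l)) else 0)"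

text \<open>One step of the embedded jump chain; the second component counts the rings of player i.\<close>
definition kstep ::
  "nat \<Rightarrow> (nat \<Rightarrow> 'c) \<Rightarrow> ('c \<Rightarrow> real) \<Rightarrow> ('c \<Rightarrow> 's \<Rightarrow> 'a \<Rightarrow> 's pmf) \<Rightarrow> (nat \<Rightarrow> 's \<Rightarrow> 'a) \<Rightarrow> nat \<Rightarrow>
   (nat \<Rightarrow> 's) \<times> nat \<Rightarrow> ((nat \<Rightarrow> 's) \<times> nat) pmf" where
  "kstep N cl lam phi p i xk =
     bind_pmf (sel N cl lam) (\<lambda>j.
       map_pmf (\<lambda>s'. ((fst xk)(j := s'), if j = i then Suc (snd xk) else snd xk))
               (phi (cl j) (fst xk j) (p j (fst xk j))))"

definition dist ::
  "nat \<Rightarrow> (nat \<Rightarrow> 'c) \<Rightarrow> ('c \<Rightarrow> real) \<Rightarrow> ('c \<Rightarrow> 's \<Rightarrow> 'a \<Rightarrow> 's pmf) \<Rightarrow> (nat \<Rightarrow> 's \<Rightarrow> 'a) \<Rightarrow> nat \<Rightarrow>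
   (nat \<Rightarrow> 's) pmf \<Rightarrow> nat \<Rightarrow> ((nat \<Rightarrow> 's) \<times> nat) pmf" where
  "dist N cl lam phi p i init n =
     ((\<lambda>q. bind_pmf q (kstep N cl lam phi p i)) ^^ n) (map_pmf (\<lambda>x. (x, 0)) init)"

text \<open>Expected total reward of player i over its first T clock rings: the (n+1)-th ring
  overall is player i's (k+1)-th ring iff the selected player is i and k rings of i occurred
  before; the reward is evaluated at the (pre-jump) state at the ring time.\<close>
definition reward_upto ::
  "nat \<Rightarrow> (nat \<Rightarrow> 'c) \<Rightarrow> ('c \<Rightarrow> real) \<Rightarrow> ('c \<Rightarrow> 's \<Rightarrow> 'a \<Rightarrow> 's pmf) \<Rightarrow>
   ('c \<Rightarrow> 's \<Rightarrow> 'a \<Rightarrow> ('c \<Rightarrow> 's \<Rightarrow> 'a \<Rightarrow> real) \<Rightarrow> real) \<Rightarrow> (nat \<Rightarrow> 's \<Rightarrow> 'a) \<Rightarrow> (nat \<Rightarrow> 's) pmf \<Rightarrow>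
   nat \<Rightarrow> nat \<Rightarrow> real" where
  "reward_upto N cl lam phi r p init i T =
     (\<Sum>n. measure_pmf.expectation (pair_pmf (dist N cl lam phi p i init n) (sel N cl lam))
        (\<lambda>((x, k), j). if j = i \<and> k < T then r (cl i) (x i) (p i (x i)) (emp N cl p x) else 0))"

definition Jpay ::
  "nat \<Rightarrow> (nat \<Rightarrow> 'c) \<Rightarrow> ('c \<Rightarrow> real) \<Rightarrow> ('c \<Rightarrow> 's \<Rightarrow> 'a \<Rightarrow> 's pmf) \<Rightarrow>
   ('c \<Rightarrow> 's \<Rightarrow> 'a \<Rightarrow> ('c \<Rightarrow> 's \<Rightarrow> 'a \<Rightarrow> real) \<Rightarrow> real) \<Rightarrow> (nat \<Rightarrow> 's \<Rightarrow> 'a) \<Rightarrow> (nat \<Rightarrow> 's) pmf \<Rightarrow>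
   nat \<Rightarrow> real" where
  "Jpay N cl lam phi r p init i = lim (\<lambda>T. reward_upto N cl lam phi r p init i T / real T)"

end

theory Submission
  imports Defs
begin


definition Kapp :: "'x set \<Rightarrow> ('x \<Rightarrow> 'x pmf) \<Rightarrow> ('x \<Rightarrow> real) \<Rightarrow> 'x \<Rightarrow> real" where
  "Kapp E K v y = (\<Sum>x\<in>E. v x * pmf (K x) y)"

definition closedK :: "'x set \<Rightarrow> ('x \<Rightarrow> 'x pmf) \<Rightarrow> bool" where
  "closedK E K \<longleftrightarrow> (\<forall>x\<in>E. set_pmf (K x) \<subseteq> E)"

definition probv :: "'x set \<Rightarrow> ('x \<Rightarrow> real) \<Rightarrow> bool" where
  "probv E v \<longleftrightarrow> (\<forall>x. 0 \<le> v x) \<and> (\<forall>x. x \<notin> E \<longrightarrow> v x = 0) \<and> sum v E = 1"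

definition statv :: "'x set \<Rightarrow> ('x \<Rightarrow> 'x pmf) \<Rightarrow> ('x \<Rightarrow> real) \<Rightarrow> bool" where
  "statv E K v \<longleftrightarrow> probv E v \<and> (\<forall>y\<in>E. Kapp E K v y = v y)"

lemma Kapp_lin:
  "Kapp E K (\<lambda>x. a * f x + b * g x) y = a * Kapp E K f y + b * Kapp E K g y"
  by (simp add: Kapp_def sum.distrib sum_distrib_left algebra_simps)

lemma Kapp_diff:
  "Kapp E K (\<lambda>x. f x - g x) y = Kapp E K f y - Kapp E K g y"
  by (simp add: Kapp_def sum_subtractf algebra_simps)

lemma sum_Kapp:
  assumes "finite E" "closedK E K"
  shows "(\<Sum>y\<in>E. Kapp E K g y) = sum g E"
proof -
  have "(\<Sum>y\<in>E. Kapp E K g y) = (\<Sum>x\<in>E. g x * (\<Sum>y\<in>E. pmf (K x) y))"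
    unfolding Kapp_def by (subst sum.swap) (simp add: sum_distrib_left)
  also have "\<dots> = sum g E"
    using assms by (intro sum.cong refl) (simp add: sum_pmf_eq_1 closedK_def)
  finally show ?thesis .
qed

lemma Kapp_pmf:
  assumes "finite E" "set_pmf q \<subseteq> E"
  shows "Kapp E K (pmf q) y = pmf (bind_pmf q K) y"
proof -
  have "pmf (bind_pmf q K) y = (\<Sum>x\<in>E. pmf (K x) y * pmf q x)"
    unfolding pmf_bind using assms by (intro integral_measure_pmf_real) auto
  then show ?thesis by (simp add: Kapp_def mult.commute)
qed

lemma propagate_pos:
  assumes fin: "finite E" and cl: "closedK E K"
    and Rel: "\<And>x y. x \<in> E \<Longrightarrow> (x, y) \<in> Rel \<Longrightarrow> y \<in> set_pmf (K x)"
    and st: "\<forall>y\<in>E. Kapp E K g y = g y" and nn: "\<forall>x. 0 \<le> g x"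
    and path: "(x, y) \<in> Rel\<^sup>*" and x: "x \<in> E" "0 < g x"
  shows "y \<in> E \<and> 0 < g y"
  using path
proof (induction rule: rtrancl_induct)
  case base
  then show ?case using x by simp
next
  case (step y z)
  then have yE: "y \<in> E" and gy: "0 < g y" by auto
  have zK: "z \<in> set_pmf (K y)" using Rel[OF yE step(2)] .
  then have zE: "z \<in> E" using cl yE by (auto simp: closedK_def)
  have "g y * pmf (K y) z \<le> (\<Sum>x\<in>E. g x * pmf (K x) z)"
    using fin yE nn by (intro member_le_sum) auto
  moreover have "0 < g y * pmf (K y) z" using gy zK by (simp add: pmf_positive)
  ultimately have "0 < Kapp E K g z" unfolding Kapp_def by linarith
  then show ?case using st zE by auto
qed

lemma stat_aux:
  assumes fin: "finite E" and cl: "closedK E K"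
    and Rel: "\<And>x y. x \<in> E \<Longrightarrow> (x, y) \<in> Rel \<Longrightarrow> y \<in> set_pmf (K x)"
    and reach: "\<forall>x\<in>E. (x, z) \<in> Rel\<^sup>*"
    and s1: "statv E K p1" and s2: "statv E K p2"
    and x: "x \<in> E" "p2 x < p1 x"
  shows "p2 z < p1 z"
proof -
  define d where "d = (\<lambda>x. p1 x - p2 x)"
  have std: "Kapp E K d y = d y" if "y \<in> E" for y
    using s1 s2 that unfolding d_def statv_def by (simp add: Kapp_diff)
  define a where "a = (\<lambda>x. \<bar>d x\<bar>)"
  have ge: "a y \<le> Kapp E K a y" if "y \<in> E" for y
  proof -
    have "a y = \<bar>\<Sum>x\<in>E. d x * pmf (K x) y\<bar>" using std[OF that] by (simp add: a_def Kapp_def)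
    also have "\<dots> \<le> (\<Sum>x\<in>E. \<bar>d x * pmf (K x) y\<bar>)" by (rule sum_abs)
    also have "\<dots> = Kapp E K a y" by (simp add: Kapp_def a_def abs_mult)
    finally show ?thesis .
  qed
  have "(\<Sum>y\<in>E. Kapp E K a y - a y) = 0"
    using sum_Kapp[OF fin cl, of a] by (simp add: sum_subtractf)
  then have "\<forall>y\<in>E. Kapp E K a y - a y = 0"
    using fin ge by (subst sum_nonneg_eq_0_iff[symmetric]) auto
  then have sta: "\<forall>y\<in>E. Kapp E K a y = a y" by auto
  define g where "g = (\<lambda>x. (1/2) * a x + (1/2) * d x)"
  have stg: "\<forall>y\<in>E. Kapp E K g y = g y"
    unfolding g_def using sta std Kapp_lin[of E K "1/2" a "1/2" d] by simp
  have nng: "\<forall>x. 0 \<le> g x" by (simp add: g_def a_def) arith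
  have "0 < g x" using x by (simp add: g_def a_def d_def)
  from propagate_pos[OF fin cl Rel stg nng _ x(1) this] reach x(1)
  have "0 < g z" by auto
  then show ?thesis unfolding g_def a_def d_def by (auto simp: abs_if field_simps split: if_splits)
qed

lemma stat_unique:
  assumes fin: "finite E" and cl: "closedK E K"
    and Rel: "\<And>x y. x \<in> E \<Longrightarrow> (x, y) \<in> Rel \<Longrightarrow> y \<in> set_pmf (K x)"
    and reach: "\<forall>x\<in>E. (x, z) \<in> Rel\<^sup>*"
    and s1: "statv E K p1" and s2: "statv E K p2"
  shows "p1 = p2"
proof (rule ccontr)
  assume ne: "p1 \<noteq> p2"
  then obtain x where x: "p1 x \<noteq> p2 x" by auto
  have xE: "x \<in> E" using x s1 s2 unfolding statv_def probv_def by metis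
  have sum1: "sum p1 E = sum p2 E" using s1 s2 by (simp add: statv_def probv_def)
  have ex: "\<exists>x\<in>E. q2 x < q1 x" if "sum q1 E = sum q2 E" "x \<in> E" "q1 x < q2 x" for q1 q2 :: "_ \<Rightarrow> real"
  proof (rule ccontr)
    assume "\<not> ?thesis"
    then have "\<forall>x\<in>E. q1 x \<le> q2 x" by auto
    then have "sum q1 E < sum q2 E" using that fin by (intro sum_strict_mono_ex1) auto
    then show False using that by simp
  qed
  show False
  proof (cases "p1 x < p2 x")
    case True
    obtain y where "y \<in> E" "p2 y < p1 y" using ex[OF sum1 xE True] by auto
    have "p2 z < p1 z" by (rule stat_aux[OF fin cl Rel reach s1 s2 \<open>y \<in> E\<close> \<open>p2 y < p1 y\<close>])
    moreover have "p1 z < p2 z" by (rule stat_aux[OF fin cl Rel reach s2 s1 xE True])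
    ultimately show False by simp
  next
    case False
    then have lt: "p2 x < p1 x" using x by simp
    obtain y where "y \<in> E" "p1 y < p2 y" using ex[OF sum1[symmetric] xE lt] by auto
    have "p1 z < p2 z" by (rule stat_aux[OF fin cl Rel reach s2 s1 \<open>y \<in> E\<close> \<open>p1 y < p2 y\<close>])
    moreover have "p2 z < p1 z" by (rule stat_aux[OF fin cl Rel reach s1 s2 xE lt])
    ultimately show False by simp
  qed
qed


lemma limit_point:
  assumes fin: "finite E" and cl: "closedK E K"
    and prob: "\<forall>n. probv E (v n)"
    and near: "\<forall>y\<in>E. (\<lambda>n. Kapp E K (v n) y - v n y) \<longlonglongrightarrow> 0"
  shows "\<exists>r \<pi>. strict_mono r \<and> statv E K \<pi> \<and> (\<forall>y. (\<lambda>n. v (r n) y) \<longlonglongrightarrow> \<pi> y)"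
proof -
  have bnd: "bounded ((\<lambda>x. x k) ` range v)" for k
  proof -
    have "\<forall>n. \<bar>v n k\<bar> \<le> 1"
    proof
      fix n
      show "\<bar>v n k\<bar> \<le> 1"
      proof (cases "k \<in> E")
        case True
        have "v n k \<le> sum (v n) E" using fin True prob by (intro member_le_sum) (auto simp: probv_def)
        then show ?thesis using prob by (auto simp: probv_def)
      next
        case False then show ?thesis using prob by (auto simp: probv_def)
      qed
    qed
    then show ?thesis unfolding bounded_iff by (intro exI[of _ 1]) auto
  qed
  have "\<forall>\<delta>\<subseteq>E. \<exists>l r. strict_mono r \<and>
      (\<forall>\<epsilon>>0. \<forall>\<^sub>F n in sequentially. \<forall>i\<in>\<delta>. dist_class.dist ((\<lambda>f k. f k) (v (r n)) i) ((\<lambda>f k. f k) l i) < \<epsilon>)"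
    by (rule compact_lemma_general[where unproj = "\<lambda>e. e"]) (use fin bnd in auto)
  then obtain l r where r: "strict_mono r"
    and ev: "\<forall>\<epsilon>>0. \<forall>\<^sub>F n in sequentially. \<forall>i\<in>E. dist_class.dist (v (r n) i) (l i) < \<epsilon>"
    by auto
  define \<pi> where "\<pi> = (\<lambda>y. if y \<in> E then l y else 0)"
  have lim: "(\<lambda>n. v (r n) y) \<longlonglongrightarrow> \<pi> y" for y
  proof (cases "y \<in> E")
    case True
    show ?thesis
      unfolding \<pi>_def using True
    proof (intro tendstoI)
      fix e :: real assume "0 < e"
      then have "\<forall>\<^sub>F n in sequentially. \<forall>i\<in>E. dist_class.dist (v (r n) i) (l i) < e" using ev by auto
      then show "\<forall>\<^sub>F n in sequentially. dist_class.dist (v (r n) y) (if y \<in> E then l y else 0) < e"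
        by (rule eventually_mono) (use True in auto)
    qed
  next
    case False
    then show ?thesis using prob by (simp add: \<pi>_def probv_def)
  qed
  have nn: "0 \<le> \<pi> y" for y
    by (rule LIMSEQ_le_const[OF lim[of y]]) (use prob in \<open>auto simp: probv_def\<close>)
  have "(\<lambda>n. sum (v (r n)) E) \<longlonglongrightarrow> sum \<pi> E" by (intro tendsto_sum lim)
  moreover have "(\<lambda>n. sum (v (r n)) E) = (\<lambda>n. 1)" using prob by (simp add: probv_def)
  ultimately have s1: "sum \<pi> E = 1" using LIMSEQ_unique tendsto_const by metis
  have st: "Kapp E K \<pi> y = \<pi> y" if y: "y \<in> E" for y
  proof -
    have a: "(\<lambda>n. Kapp E K (v (r n)) y) \<longlonglongrightarrow> Kapp E K \<pi> y"
      unfolding Kapp_def by (intro tendsto_sum tendsto_mult_right lim)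
    have b: "(\<lambda>n. Kapp E K (v (r n)) y - v (r n) y) \<longlonglongrightarrow> 0"
      using LIMSEQ_subseq_LIMSEQ[OF near[rule_format, OF y] r] by (simp add: o_def)
    have "(\<lambda>n. Kapp E K (v (r n)) y - v (r n) y) \<longlonglongrightarrow> Kapp E K \<pi> y - \<pi> y"
      by (intro tendsto_diff a lim)
    with b have "Kapp E K \<pi> y - \<pi> y = 0" using LIMSEQ_unique by blast
    then show ?thesis by simp
  qed
  have "statv E K \<pi>"
    unfolding statv_def probv_def using nn s1 st by (auto simp: \<pi>_def)
  then show ?thesis using r lim by blast
qed

lemma conv_stat:
  assumes fin: "finite E" and cl: "closedK E K"
    and Rel: "\<And>x y. x \<in> E \<Longrightarrow> (x, y) \<in> Rel \<Longrightarrow> y \<in> set_pmf (K x)"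
    and reach: "\<forall>x\<in>E. (x, z) \<in> Rel\<^sup>*"
    and prob: "\<forall>n. probv E (v n)"
    and near: "\<forall>y\<in>E. (\<lambda>n. Kapp E K (v n) y - v n y) \<longlonglongrightarrow> 0"
  shows "\<exists>\<pi>. statv E K \<pi> \<and> (\<forall>y. (\<lambda>n. v n y) \<longlonglongrightarrow> \<pi> y)"
proof -
  obtain r \<pi> where r: "strict_mono r" and st: "statv E K \<pi>" and lim: "\<forall>y. (\<lambda>n. v (r n) y) \<longlonglongrightarrow> \<pi> y"
    using limit_point[OF fin cl prob near] by blast
  have "(\<lambda>n. v n y) \<longlonglongrightarrow> \<pi> y" for y
  proof (rule ccontr)
    assume "\<not> (\<lambda>n. v n y) \<longlonglongrightarrow> \<pi> y"
    then obtain e where e: "e > 0" and ne: "\<not> (\<forall>\<^sub>F n in sequentially. dist_class.dist (v n y) (\<pi> y) < e)"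
      unfolding tendsto_iff by auto
    have ne': "\<not> eventually (\<lambda>n. dist_class.dist (v n y) (\<pi> y) < e) sequentially"
      using ne by simp
    have "\<exists>s::nat\<Rightarrow>nat. strict_mono s \<and> (\<forall>n::nat. \<not> dist_class.dist (v (s n) y) (\<pi> y) < e)"
      using not_eventually_sequentiallyD[OF ne'] by simp
    then obtain s :: "nat \<Rightarrow> nat" where s: "strict_mono s" and sn: "\<forall>n::nat. \<not> dist_class.dist (v (s n) y) (\<pi> y) < e"
      by blast
    have prob': "\<forall>n. probv E ((v \<circ> s) n)" using prob by simp
    have near': "\<forall>y\<in>E. (\<lambda>n. Kapp E K ((v \<circ> s) n) y - (v \<circ> s) n y) \<longlonglongrightarrow> 0"
      using near LIMSEQ_subseq_LIMSEQ[OF _ s] by (auto simp: o_def)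
    obtain r' \<pi>' where st': "statv E K \<pi>'" and lim': "\<forall>y. (\<lambda>n. (v \<circ> s) (r' n) y) \<longlonglongrightarrow> \<pi>' y"
      using limit_point[OF fin cl prob' near'] by blast
    have "\<pi>' = \<pi>" by (rule stat_unique[OF fin cl Rel reach st' st])
    then have "(\<lambda>n. v (s (r' n)) y) \<longlonglongrightarrow> \<pi> y" using lim' by simp
    then have "\<forall>\<^sub>F n in sequentially. dist_class.dist (v (s (r' n)) y) (\<pi> y) < e"
      using e unfolding tendsto_iff by auto
    then obtain n where "dist_class.dist (v (s (r' n)) y) (\<pi> y) < e"
      using eventually_sequentially by auto
    then show False using sn by auto
  qed
  then show ?thesis using st by blast
qed

lemma exists_stat:
  assumes fin: "finite E" and cl: "closedK E K" and x0: "x0 \<in> E"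
  shows "\<exists>\<pi>. statv E K \<pi>"
proof -
  define q where "q = (\<lambda>k. ((\<lambda>q. bind_pmf q K) ^^ k) (return_pmf x0))"
  have qS: "q (Suc k) = bind_pmf (q k) K" for k by (simp add: q_def)
  have qE: "set_pmf (q k) \<subseteq> E" for k
  proof (induction k)
    case 0 then show ?case using x0 by (simp add: q_def)
  next
    case (Suc k) then show ?case using cl by (auto simp: qS closedK_def)
  qed
  define v where "v = (\<lambda>n y. (\<Sum>k<Suc n. pmf (q k) y) / real (Suc n))"
  have prob: "\<forall>n. probv E (v n)"
  proof
    fix n
    have "sum (v n) E = (\<Sum>y\<in>E. \<Sum>k<Suc n. pmf (q k) y) / real (Suc n)"
      unfolding v_def by (simp add: sum_divide_distrib)
    also have "(\<Sum>y\<in>E. \<Sum>k<Suc n. pmf (q k) y) / real (Suc n) = (\<Sum>k<Suc n. \<Sum>y\<in>E. pmf (q k) y) / real (Suc n)"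
      by (subst sum.swap) (rule refl)
    also have "\<dots> = (\<Sum>k<Suc n. (1::real)) / real (Suc n)"
      using fin qE by (intro arg_cong2[where f="(/)"] sum.cong refl) (simp add: sum_pmf_eq_1)
    also have "\<dots> = 1" by simp
    finally have "sum (v n) E = 1" .
    then show "probv E (v n)"
    proof -
      have z: "\<And>k x. x \<notin> E \<Longrightarrow> pmf (q k) x = 0" using qE by (meson pmf_eq_0_set_pmf subsetD)
      show ?thesis unfolding probv_def using \<open>sum (v n) E = 1\<close> by (auto simp: v_def z sum_nonneg)
    qed
  qed
  have near: "\<forall>y\<in>E. (\<lambda>n. Kapp E K (v n) y - v n y) \<longlonglongrightarrow> 0"
  proof
    fix y assume y: "y \<in> E"
    have eq: "Kapp E K (v n) y - v n y = (pmf (q (Suc n)) y - pmf (q 0) y) / real (Suc n)" for n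
    proof -
      have "Kapp E K (v n) y = (\<Sum>x\<in>E. \<Sum>k<Suc n. pmf (q k) x * pmf (K x) y) / real (Suc n)"
        unfolding v_def Kapp_def by (simp only: sum_divide_distrib[symmetric] divide_inverse sum_distrib_right mult.assoc mult.commute[of "inverse _"])
      also have "(\<Sum>x\<in>E. \<Sum>k<Suc n. pmf (q k) x * pmf (K x) y) = (\<Sum>k<Suc n. \<Sum>x\<in>E. pmf (q k) x * pmf (K x) y)"
        by (rule sum.swap)
      also have "\<dots> = (\<Sum>k<Suc n. Kapp E K (pmf (q k)) y)" by (simp add: Kapp_def)
      also have "\<dots> = (\<Sum>k<Suc n. pmf (q (Suc k)) y)"
        using Kapp_pmf[OF fin qE] by (simp add: qS)
      finally have "Kapp E K (v n) y = (\<Sum>k<Suc n. pmf (q (Suc k)) y) / real (Suc n)" .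
      moreover have "(\<Sum>k<Suc n. pmf (q (Suc k)) y) - (\<Sum>k<Suc n. pmf (q k) y) = pmf (q (Suc n)) y - pmf (q 0) y"
        by (simp only: sum_subtractf[symmetric]) (rule sum_lessThan_telescope)
      ultimately show ?thesis unfolding v_def
        by (simp only: diff_divide_distrib[symmetric])
    qed
    show "(\<lambda>n. Kapp E K (v n) y - v n y) \<longlonglongrightarrow> 0"
      unfolding eq
    proof (rule Lim_null_comparison[OF _ LIMSEQ_inverse_real_of_nat])
      show "\<forall>\<^sub>F n in sequentially. norm ((pmf (q (Suc n)) y - pmf (q 0) y) / real (Suc n)) \<le> inverse (real (Suc n))"
      proof (intro always_eventually allI)
        fix n
        have "\<bar>pmf (q (Suc n)) y - pmf (q 0) y\<bar> \<le> 1" using pmf_le_1 pmf_nonneg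
          by (smt (verit))
        then show "norm ((pmf (q (Suc n)) y - pmf (q 0) y) / real (Suc n)) \<le> inverse (real (Suc n))"
          by (simp add: divide_simps)
      qed
    qed
  qed
  obtain r \<pi> where "statv E K \<pi>" using limit_point[OF fin cl prob near] by blast
  then show ?thesis by blast
qed


lemma UD_mem: "u \<in> UD S A c \<Longrightarrow> s \<in> S c \<Longrightarrow> u s \<in> A c s"
  by (auto simp: UD_def PiE_def Pi_def)

lemma closed_single:
  assumes kernel: "\<forall>c. \<forall>s\<in>S c. \<forall>a\<in>A c s. set_pmf (phi c s a) \<subseteq> S c"
    and u: "u \<in> UD S A c"
  shows "closedK (S c) (\<lambda>s. phi c s (u s))"
  using kernel UD_mem[OF u] by (auto simp: closedK_def)

lemma stat_dist_iff:
  assumes lam: "0 < lam c" and fin: "finite (S c)"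
  shows "stationary_dist S phi lam c u \<eta> \<longleftrightarrow> statv (S c) (\<lambda>s. phi c s (u s)) \<eta>"
proof -
  have eq: "(\<Sum>s'\<in>S c. \<eta> s' * (lam c * (pmf (phi c s' (u s')) s - (if s' = s then 1 else 0))))
      = lam c * (Kapp (S c) (\<lambda>s. phi c s (u s)) \<eta> s - \<eta> s)" if "s \<in> S c" for s
  proof -
    have "(\<Sum>s'\<in>S c. \<eta> s' * (lam c * (pmf (phi c s' (u s')) s - (if s' = s then 1 else 0))))
        = lam c * (\<Sum>s'\<in>S c. \<eta> s' * pmf (phi c s' (u s')) s) - lam c * (\<Sum>s'\<in>S c. (if s' = s then \<eta> s' else 0))"
      by (simp add: sum_distrib_left sum_subtractf[symmetric] algebra_simps if_distrib cong: if_cong)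
    also have "(\<Sum>s'\<in>S c. (if s' = s then \<eta> s' else 0)) = \<eta> s"
      using that fin by (simp add: sum.delta')
    finally show ?thesis by (simp add: Kapp_def algebra_simps)
  qed
  show ?thesis
    unfolding stationary_dist_def statv_def probv_def using eq lam by auto
qed

lemma reach_single:
  assumes kernel: "\<forall>c. \<forall>s\<in>S c. \<forall>a\<in>A c s. set_pmf (phi c s a) \<subseteq> S c"
    and u: "u \<in> UD S A c" and fin: "finite (S c)"
    and A2: "assumption_A2 S A phi" and ne: "S c \<noteq> {}"
  shows "\<exists>z\<in>S c. \<forall>s\<in>S c. (s, z) \<in> (step_rel S phi c u)\<^sup>*"
proof -
  let ?R = "step_rel S phi c u"
  define Reach where "Reach = (\<lambda>s. {t. (s, t) \<in> ?R\<^sup>*})"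
  have stepS: "t' \<in> S c" if "(t, t') \<in> ?R" for t t'
  proof -
    from that have "t \<in> S c" "0 < pmf (phi c t (u t)) t'" by (auto simp: step_rel_def)
    then show ?thesis using kernel UD_mem[OF u, of t] by (auto simp: pmf_positive_iff)
  qed
  have RS: "t \<in> S c" if "(s, t) \<in> ?R\<^sup>*" "s \<in> S c" for s t
    using that(1,2) by (induction rule: rtrancl_induct) (auto intro: stepS)
  have ReachS: "Reach s \<subseteq> S c" if "s \<in> S c" for s using RS that by (auto simp: Reach_def)
  obtain R0 where R0: "recurrent_class S phi c u R0" and uniq: "\<And>R. recurrent_class S phi c u R \<Longrightarrow> R = R0"
    using A2 u unfolding assumption_A2_def by metis
  have reachR0: "\<exists>y\<in>R0. (s, y) \<in> ?R\<^sup>*" if s: "s \<in> S c" for s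
  proof -
    obtain y where y: "y \<in> Reach s" and ymin: "\<forall>t. t \<in> Reach s \<longrightarrow> card (Reach y) \<le> card (Reach t)"
      using ex_has_least_nat[of "\<lambda>t. t \<in> Reach s" s "\<lambda>t. card (Reach t)"] by (auto simp: Reach_def)
    have yS: "y \<in> S c" using y ReachS[OF s] by auto
    have sub: "Reach t \<subseteq> Reach y" if "t \<in> Reach y" for t
      using that by (auto simp: Reach_def)
    have backR: "y \<in> Reach t" if tR: "t \<in> Reach y" for t
    proof -
      have "t \<in> Reach s" using tR y by (auto simp: Reach_def)
      then have "card (Reach y) \<le> card (Reach t)" using ymin by auto
      moreover have "finite (Reach y)" using ReachS[OF yS] fin by (auto intro: finite_subset)
      ultimately have "Reach t = Reach y" using sub[OF tR] card_subset_eq[of "Reach y" "Reach t"]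
        by (meson card_mono le_antisym)
      then show ?thesis by (auto simp: Reach_def)
    qed
    have "recurrent_class S phi c u (Reach y)"
      unfolding recurrent_class_def
    proof (intro conjI ballI allI impI)
      show "Reach y \<noteq> {}" by (auto simp: Reach_def)
      show "Reach y \<subseteq> S c" using ReachS[OF yS] .
      show "s' \<in> Reach y" if "t \<in> Reach y" "(t, s') \<in> ?R\<^sup>*" for t s'
        using that by (auto simp: Reach_def)
      show "(t, t') \<in> ?R\<^sup>*" if "t \<in> Reach y" "t' \<in> Reach y" for t t'
        using backR[OF that(1)] that(2) by (auto simp: Reach_def)
    qed
    then have "Reach y = R0" using uniq by auto
    then show ?thesis using y by (auto simp: Reach_def)
  qed
  obtain z where z: "z \<in> R0" using R0 unfolding recurrent_class_def by blast
  have "z \<in> S c" using R0 z unfolding recurrent_class_def by blast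
  moreover have "(s, z) \<in> ?R\<^sup>*" if sS: "s \<in> S c" for s
  proof -
    obtain y where "y \<in> R0" "(s, y) \<in> ?R\<^sup>*" using reachR0[OF sS] by auto
    moreover have "(y, z) \<in> ?R\<^sup>*" using R0 z \<open>y \<in> R0\<close> unfolding recurrent_class_def by blast
    ultimately show ?thesis by (meson rtrancl_trans)
  qed
  ultimately show ?thesis by blast
qed

lemma eta_stat:
  assumes kernel: "\<forall>c. \<forall>s\<in>S c. \<forall>a\<in>A c s. set_pmf (phi c s a) \<subseteq> S c"
    and u: "u \<in> UD S A c" and fin: "finite (S c)"
    and A2: "assumption_A2 S A phi" and ne: "S c \<noteq> {}" and lam: "0 < lam c"
  shows "statv (S c) (\<lambda>s. phi c s (u s)) (eta S phi lam c u)"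
proof -
  have cl: "closedK (S c) (\<lambda>s. phi c s (u s))" by (rule closed_single[OF kernel u])
  obtain x0 where "x0 \<in> S c" using ne by auto
  obtain \<pi> where st: "statv (S c) (\<lambda>s. phi c s (u s)) \<pi>" using exists_stat[OF fin cl \<open>x0 \<in> S c\<close>] by auto
  obtain z where z: "z \<in> S c" "\<forall>s\<in>S c. (s, z) \<in> (step_rel S phi c u)\<^sup>*"
    using reach_single[OF kernel u fin A2 ne] by auto
  have Rel: "t \<in> set_pmf (phi c s (u s))" if "s \<in> S c" "(s, t) \<in> step_rel S phi c u" for s t
    using that by (auto simp: step_rel_def pmf_positive_iff)
  have "eta S phi lam c u = \<pi>"
    unfolding eta_def
  proof (rule the1_equality)
    show "\<exists>!\<eta>. stationary_dist S phi lam c u \<eta>"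
    proof (rule ex1I[of _ \<pi>])
      show "stationary_dist S phi lam c u \<pi>" using st stat_dist_iff[of lam c S phi u, OF lam fin] by auto
      show "\<eta> = \<pi>" if "stationary_dist S phi lam c u \<eta>" for \<eta>
        using stat_unique[OF fin cl Rel z(2) _ st] that stat_dist_iff[of lam c S phi u, OF lam fin] by auto
    qed
    show "stationary_dist S phi lam c u \<pi>" using st stat_dist_iff[of lam c S phi u, OF lam fin] by auto
  qed
  then show ?thesis using st by simp
qed


lemma nn_fin_one:
  fixes f :: "'x \<Rightarrow> real"
  assumes nn: "\<forall>x. 0 \<le> f x" and out: "\<forall>x. x \<notin> B \<longrightarrow> f x = 0" and fin: "finite B" and s: "sum f B = 1"
  shows "(\<integral>\<^sup>+ x. ennreal (f x) \<partial>count_space UNIV) = 1"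
proof -
  have "(\<integral>\<^sup>+ x. ennreal (f x) \<partial>count_space UNIV) = (\<integral>\<^sup>+ x. ennreal (f x) * indicator B x \<partial>count_space UNIV)"
    using out by (intro nn_integral_cong) (auto simp: indicator_def)
  also have "\<dots> = (\<integral>\<^sup>+ x. ennreal (f x) \<partial>count_space B)"
    by (subst nn_integral_count_space_indicator) auto
  also have "\<dots> = (\<Sum>x\<in>B. ennreal (f x))" using fin by (simp add: nn_integral_count_space_finite)
  also have "\<dots> = ennreal (sum f B)" using nn by (simp add: sum_ennreal)
  finally show ?thesis using s by simp
qed

lemma pmf_embed_fin:
  fixes f :: "'x \<Rightarrow> real"
  assumes "\<forall>x. 0 \<le> f x" "\<forall>x. x \<notin> B \<longrightarrow> f x = 0" "finite B" "sum f B = 1"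
  shows "pmf (embed_pmf f) x = f x"
  using assms by (intro pmf_embed_pmf nn_fin_one[OF assms]) auto

lemma set_embed_fin:
  fixes f :: "'x \<Rightarrow> real"
  assumes "\<forall>x. 0 \<le> f x" "\<forall>x. x \<notin> B \<longrightarrow> f x = 0" "finite B" "sum f B = 1"
  shows "set_pmf (embed_pmf f) = {x. f x \<noteq> 0}"
  using assms by (intro set_embed_pmf nn_fin_one[OF assms]) auto

lemma pmf_map_pair_const:
  "pmf (map_pmf (\<lambda>z. (z, c)) M) (y, t) = (if t = c then pmf M y else 0)"
proof -
  have "(\<lambda>z. (z, c)) -` {(y, t)} = (if t = c then {y} else {})" by auto
  then show ?thesis by (simp add: pmf_map measure_pmf_single)
qed

locale jchain =
  fixes N :: nat and cl :: "nat \<Rightarrow> 'c" and lam :: "'c \<Rightarrow> real"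
    and phi :: "'c \<Rightarrow> 's \<Rightarrow> 'a \<Rightarrow> 's pmf" and p :: "nat \<Rightarrow> 's \<Rightarrow> 'a" and i :: nat
    and S :: "'c \<Rightarrow> 's set"
  assumes Npos: "0 < N" and ilt: "i < N" and lampos: "\<forall>c. 0 < lam c"
    and closed: "\<forall>j<N. \<forall>s\<in>S (cl j). set_pmf (phi (cl j) s (p j s)) \<subseteq> S (cl j)"
    and finS: "\<forall>c. finite (S c)"
begin

definition "Lam = (\<Sum>l<N. lam (cl l))"
definition "w j = (if j < N then lam (cl j) / Lam else 0)"
definition "E = PiE {..<N} (\<lambda>j. S (cl j))"
definition "rho x = restrict x {..<N}"
definition "Pj j x = map_pmf (\<lambda>s'. x(j := s')) (phi (cl j) (x j) (p j (x j)))"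
definition "Kj x = bind_pmf (sel N cl lam) (\<lambda>j. Pj j x)"
abbreviation "ks \<equiv> kstep N cl lam phi p i"

lemma Lam_pos: "0 < Lam"
  unfolding Lam_def using Npos lampos by (intro sum_pos) auto

lemma w_nn: "0 \<le> w j" using Lam_pos lampos by (simp add: w_def less_imp_le)

lemma w_pos: "j < N \<Longrightarrow> 0 < w j" using Lam_pos lampos by (simp add: w_def)

lemma sum_w: "(\<Sum>j<N. w j) = 1"
  using Lam_pos by (simp add: w_def sum_divide_distrib[symmetric] Lam_def)

lemma pmf_sel: "pmf (sel N cl lam) j = w j"
proof -
  have "(\<lambda>j. if j < N then lam (cl j) / (\<Sum>l<N. lam (cl l)) else 0) = w"
    by (auto simp: w_def Lam_def)
  then have "sel N cl lam = embed_pmf w" by (simp add: sel_def)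
  then show ?thesis using w_nn sum_w
    by (simp add: pmf_embed_fin[where B = "{..<N}"] w_def)
qed

lemma set_sel: "set_pmf (sel N cl lam) = {..<N}"
proof -
  have "set_pmf (sel N cl lam) = {j. w j \<noteq> 0}"
    using set_pmf_eq[of "sel N cl lam"] pmf_sel by auto
  also have "\<dots> = {..<N}" using w_pos lampos Lam_pos by (auto simp: w_def) (metis less_irrefl)
  finally show ?thesis .
qed

lemma finE: "finite E" unfolding E_def using finS by (intro finite_PiE) auto

lemma upd_E: "x \<in> E \<Longrightarrow> j < N \<Longrightarrow> s \<in> S (cl j) \<Longrightarrow> x(j := s) \<in> E"
  unfolding E_def by (auto simp: PiE_iff extensional_def)

lemma set_Pj: "x \<in> E \<Longrightarrow> j < N \<Longrightarrow> set_pmf (Pj j x) \<subseteq> E"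
proof -
  assume x: "x \<in> E" and j: "j < N"
  have "x j \<in> S (cl j)" using x j by (auto simp: E_def PiE_iff)
  then have "set_pmf (phi (cl j) (x j) (p j (x j))) \<subseteq> S (cl j)" using closed j by auto
  then show ?thesis using x j upd_E by (auto simp: Pj_def)
qed

lemma closedKj: "closedK E Kj"
  unfolding closedK_def Kj_def using set_Pj set_sel by auto

lemma pmf_Kj: "pmf (Kj x) y = (\<Sum>j<N. w j * pmf (Pj j x) y)"
proof -
  have "pmf (Kj x) y = (\<Sum>j<N. pmf (Pj j x) y * pmf (sel N cl lam) j)"
    unfolding Kj_def pmf_bind by (rule integral_measure_pmf_real) (auto simp: set_sel)
  then show ?thesis by (simp add: pmf_sel mult.commute)
qed

lemma rho_upd: "j < N \<Longrightarrow> rho (x(j := s)) = (rho x)(j := s)"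
  by (auto simp: rho_def restrict_def)

lemma rho_app: "j < N \<Longrightarrow> rho x j = x j"
  by (simp add: rho_def)

lemma ks_rho: "map_pmf (apfst rho) (ks (x, k)) = ks (rho x, k)"
proof -
  have "map_pmf (apfst rho) (ks (x, k)) =
     bind_pmf (sel N cl lam) (\<lambda>j. map_pmf (\<lambda>s'. (rho (x(j := s')), if j = i then Suc k else k)) (phi (cl j) (x j) (p j (x j))))"
    unfolding kstep_def fst_conv snd_conv by (simp add: map_bind_pmf map_pmf_comp)
  also have "\<dots> = ks (rho x, k)"
    unfolding kstep_def by (intro bind_pmf_cong refl) (auto simp: set_sel rho_upd rho_app)
  finally show ?thesis .
qed

lemma dist_rho: "map_pmf (apfst rho) (dist N cl lam phi p i init n) = dist N cl lam phi p i (map_pmf rho init) n"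
proof (induction n)
  case 0
  then show ?case by (simp add: dist_def map_pmf_comp)
next
  case (Suc n)
  have "map_pmf (apfst rho) (dist N cl lam phi p i init (Suc n))
      = bind_pmf (dist N cl lam phi p i init n) (\<lambda>xk. map_pmf (apfst rho) (ks xk))"
    by (simp add: dist_def map_bind_pmf)
  also have "\<dots> = bind_pmf (dist N cl lam phi p i init n) (\<lambda>xk. ks (apfst rho xk))"
    by (intro bind_pmf_cong refl) (metis ks_rho apfst_conv prod.collapse)
  also have "\<dots> = bind_pmf (map_pmf (apfst rho) (dist N cl lam phi p i init n)) ks"
    by (simp add: bind_map_pmf)
  also have "\<dots> = dist N cl lam phi p i (map_pmf rho init) (Suc n)"
    using Suc by (simp add: dist_def)
  finally show ?case .
qed

lemma dist_Suc: "dist N cl lam phi p i init (Suc n) = bind_pmf (dist N cl lam phi p i init n) ks"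
  by (simp add: dist_def)

lemma dist_supp:
  assumes "set_pmf init \<subseteq> E"
  shows "set_pmf (dist N cl lam phi p i init n) \<subseteq> E \<times> {..n}"
proof (induction n)
  case 0 then show ?case using assms by (auto simp: dist_def)
next
  case (Suc n)
  show ?case
  proof
    fix yt assume "yt \<in> set_pmf (dist N cl lam phi p i init (Suc n))"
    then obtain x k j s' where xk: "(x, k) \<in> set_pmf (dist N cl lam phi p i init n)" and j: "j < N"
      and s': "s' \<in> set_pmf (phi (cl j) (x j) (p j (x j)))"
      and yt: "yt = (x(j := s'), if j = i then Suc k else k)"
      by (auto simp: dist_Suc kstep_def set_sel)
    have "x \<in> E" "k \<le> n" using xk Suc by auto
    moreover have "x j \<in> S (cl j)" using \<open>x \<in> E\<close> j by (auto simp: E_def PiE_iff)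
    moreover have "s' \<in> S (cl j)" using closed j \<open>x j \<in> S (cl j)\<close> s' by auto
    ultimately show "yt \<in> E \<times> {..Suc n}" using yt upd_E[of x j s'] j by auto
  qed
qed

lemma pmf_ks:
  "pmf (ks (x, k)) (y, t) = (\<Sum>j<N. w j * (if t = (if j = i then Suc k else k) then pmf (Pj j x) y else 0))"
proof -
  have eq: "map_pmf (\<lambda>s'. (x(j := s'), if j = i then Suc k else k)) (phi (cl j) (x j) (p j (x j)))
      = map_pmf (\<lambda>z. (z, if j = i then Suc k else k)) (Pj j x)" for j
    by (simp add: Pj_def map_pmf_comp)
  have "pmf (ks (x, k)) (y, t) = (\<Sum>j<N. pmf (map_pmf (\<lambda>z. (z, if j = i then Suc k else k)) (Pj j x)) (y, t) * pmf (sel N cl lam) j)"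
    unfolding kstep_def pmf_bind fst_conv snd_conv eq
    by (rule integral_measure_pmf_real) (auto simp: set_sel)
  then show ?thesis by (simp add: pmf_sel pmf_map_pair_const mult.commute)
qed

end


lemma sum_cut:
  fixes f :: "nat \<Rightarrow> real"
  assumes z: "\<forall>k>n. f k = 0" and fin: "finite B"
  shows "(\<Sum>k\<le>n. (if k \<in> B then f k else 0)) = sum f B"
proof -
  have "(\<Sum>k\<le>n. (if k \<in> B then f k else 0)) = sum f ({..n} \<inter> B)"
    by (simp add: sum.inter_restrict[symmetric])
  also have "\<dots> = sum f B"
    using z fin by (intro sum.mono_neutral_left) (auto, meson not_le)
  finally show ?thesis .
qed

locale jchain_init = jchain +
  fixes init0
  assumes init0E: "set_pmf init0 \<subseteq> PiE {..<N} (\<lambda>j. S (cl j))"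
begin

definition "D n = dist N cl lam phi p i init0 n"
definition "a n x k = pmf (D n) (x, k)"
definition "A T n x = (\<Sum>t<T. a n x t)"
definition "m n t = (\<Sum>x\<in>E. a n x t)"
definition "b T n y = (\<Sum>x\<in>E. a n x (T - 1) * (w i * pmf (Pj i x) y))"

lemma init0E': "set_pmf init0 \<subseteq> E" using init0E by (simp add: E_def)

lemma D_supp: "set_pmf (D n) \<subseteq> E \<times> {..n}"
  unfolding D_def by (rule dist_supp[OF init0E'])

lemma a_nn: "0 \<le> a n x k" by (simp add: a_def)

lemma a_zero_k: "n < k \<Longrightarrow> a n x k = 0"
  using D_supp[of n] by (auto simp: a_def pmf_eq_0_set_pmf)

lemma a_zero_x: "x \<notin> E \<Longrightarrow> a n x k = 0"
  using D_supp[of n] by (auto simp: a_def pmf_eq_0_set_pmf)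

lemma a_0: "a 0 x k = (if k = 0 then pmf init0 x else 0)"
  by (simp add: a_def D_def dist_def pmf_map_pair_const)

lemma a_Suc: "a (Suc n) y t = (\<Sum>x\<in>E. \<Sum>k\<le>n. a n x k * pmf (ks (x, k)) (y, t))"
proof -
  have "a (Suc n) y t = (\<Sum>xk\<in>E \<times> {..n}. pmf (ks xk) (y, t) * pmf (D n) xk)"
    unfolding a_def D_def dist_Suc pmf_bind
    by (rule integral_measure_pmf_real) (use D_supp[of n] finE in \<open>auto simp: D_def\<close>)
  also have "\<dots> = (\<Sum>(x, k)\<in>E \<times> {..n}. a n x k * pmf (ks (x, k)) (y, t))"
    by (intro sum.cong) (auto simp: a_def)
  also have "\<dots> = (\<Sum>x\<in>E. \<Sum>k\<le>n. a n x k * pmf (ks (x, k)) (y, t))"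
    by (rule sum.cartesian_product[symmetric])
  finally show ?thesis .
qed

lemma sum_pmf_E: "x \<in> E \<Longrightarrow> j < N \<Longrightarrow> (\<Sum>y\<in>E. pmf (Pj j x) y) = 1"
  using set_Pj finE by (simp add: sum_pmf_eq_1)

lemma G_split:
  assumes T: "1 \<le> T"
  shows "(\<Sum>j<N. w j * (if (if j = i then Suc k else k) < T then pmf (Pj j x) y else 0))
       = (if k < T then pmf (Kj x) y else 0) - (if k = T - 1 then w i * pmf (Pj i x) y else 0)"
proof -
  have iN: "i \<in> {..<N}" using ilt by simp
  have "(\<Sum>j<N. w j * (if (if j = i then Suc k else k) < T then pmf (Pj j x) y else 0))
      = w i * (if Suc k < T then pmf (Pj i x) y else 0) + (\<Sum>j\<in>{..<N} - {i}. w j * (if k < T then pmf (Pj j x) y else 0))"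
    by (subst sum.remove[OF _ iN]) (auto intro!: sum.cong)
  moreover have "(\<Sum>j<N. w j * (if k < T then pmf (Pj j x) y else 0))
      = w i * (if k < T then pmf (Pj i x) y else 0) + (\<Sum>j\<in>{..<N} - {i}. w j * (if k < T then pmf (Pj j x) y else 0))"
    by (subst sum.remove[OF _ iN]) auto
  moreover have "(\<Sum>j<N. w j * (if k < T then pmf (Pj j x) y else 0)) = (if k < T then pmf (Kj x) y else 0)"
    by (simp add: pmf_Kj)
  ultimately show ?thesis using T by (auto simp: algebra_simps)
qed

lemma A_Suc:
  assumes T: "1 \<le> T"
  shows "A T (Suc n) y = Kapp E Kj (A T n) y - b T n y"
proof -
  have "A T (Suc n) y = (\<Sum>t<T. \<Sum>x\<in>E. \<Sum>k\<le>n. a n x k * (\<Sum>j<N. w j * (if t = (if j = i then Suc k else k) then pmf (Pj j x) y else 0)))"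
    by (simp add: A_def a_Suc pmf_ks)
  also have "\<dots> = (\<Sum>x\<in>E. \<Sum>k\<le>n. a n x k * (\<Sum>j<N. w j * (\<Sum>t<T. (if t = (if j = i then Suc k else k) then pmf (Pj j x) y else 0))))"
  proof -
    have sw: "(\<Sum>t<T. \<Sum>x\<in>E. \<Sum>k\<le>n. F t x k) = (\<Sum>x\<in>E. \<Sum>k\<le>n. \<Sum>t<T. F t x k)" for F :: "nat \<Rightarrow> _ \<Rightarrow> nat \<Rightarrow> real"
    proof -
      have "(\<Sum>t<T. \<Sum>x\<in>E. \<Sum>k\<le>n. F t x k) = (\<Sum>x\<in>E. \<Sum>t<T. \<Sum>k\<le>n. F t x k)" by (rule sum.swap)
      also have "\<dots> = (\<Sum>x\<in>E. \<Sum>k\<le>n. \<Sum>t<T. F t x k)" by (rule sum.cong[OF refl], rule sum.swap)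
      finally show ?thesis .
    qed
    have inner: "(\<Sum>t<T. c * (\<Sum>j<N. w j * H j t)) = c * (\<Sum>j<N. w j * (\<Sum>t<T. H j t))" for c and H :: "nat \<Rightarrow> nat \<Rightarrow> real"
    proof -
      have "(\<Sum>t<T. c * (\<Sum>j<N. w j * H j t)) = c * (\<Sum>t<T. \<Sum>j<N. w j * H j t)"
        by (simp only: sum_distrib_left)
      also have "(\<Sum>t<T. \<Sum>j<N. w j * H j t) = (\<Sum>j<N. \<Sum>t<T. w j * H j t)" by (rule sum.swap)
      also have "\<dots> = (\<Sum>j<N. w j * (\<Sum>t<T. H j t))" by (simp only: sum_distrib_left)
      finally show ?thesis .
    qed
    show ?thesis by (simp only: sw inner)
  qed
  also have "\<dots> = (\<Sum>x\<in>E. \<Sum>k\<le>n. a n x k * ((if k < T then pmf (Kj x) y else 0) - (if k = T - 1 then w i * pmf (Pj i x) y else 0)))"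
  proof -
    have "(\<Sum>t<T. (if t = c then v else 0)) = (if c < T then v else (0::real))" for c v
      by (simp add: sum.delta')
    then show ?thesis using G_split[OF T] by simp
  qed
  also have "\<dots> = (\<Sum>x\<in>E. (\<Sum>k\<le>n. (if k \<in> {..<T} then a n x k else 0)) * pmf (Kj x) y
                         - (\<Sum>k\<le>n. (if k \<in> {T - 1} then a n x k else 0)) * (w i * pmf (Pj i x) y))"
  proof (rule sum.cong[OF refl])
    fix x
    have "(\<Sum>k\<le>n. a n x k * ((if k < T then pmf (Kj x) y else 0) - (if k = T - 1 then w i * pmf (Pj i x) y else 0)))
        = (\<Sum>k\<le>n. (if k \<in> {..<T} then a n x k else 0) * pmf (Kj x) y - (if k \<in> {T - 1} then a n x k else 0) * (w i * pmf (Pj i x) y))"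
      by (intro sum.cong refl) (auto simp: right_diff_distrib)
    also have "\<dots> = (\<Sum>k\<le>n. (if k \<in> {..<T} then a n x k else 0)) * pmf (Kj x) y
                         - (\<Sum>k\<le>n. (if k \<in> {T - 1} then a n x k else 0)) * (w i * pmf (Pj i x) y)"
      by (simp only: sum_subtractf sum_distrib_right)
    finally show "(\<Sum>k\<le>n. a n x k * ((if k < T then pmf (Kj x) y else 0) - (if k = T - 1 then w i * pmf (Pj i x) y else 0)))
        = (\<Sum>k\<le>n. (if k \<in> {..<T} then a n x k else 0)) * pmf (Kj x) y
                         - (\<Sum>k\<le>n. (if k \<in> {T - 1} then a n x k else 0)) * (w i * pmf (Pj i x) y)" .
  qed
  also have "\<dots> = (\<Sum>x\<in>E. A T n x * pmf (Kj x) y - a n x (T - 1) * (w i * pmf (Pj i x) y))"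
  proof -
    have c1: "(\<Sum>k\<le>n. (if k \<in> {..<T} then a n x k else 0)) = A T n x" for x
      unfolding A_def by (rule sum_cut) (use a_zero_k in auto)
    have c2: "(\<Sum>k\<le>n. (if k \<in> {T - 1} then a n x k else 0)) = a n x (T - 1)" for x
      using sum_cut[of n "a n x" "{T - 1}"] a_zero_k by auto
    show ?thesis by (simp only: c1 c2)
  qed
  also have "\<dots> = Kapp E Kj (A T n) y - b T n y"
    by (simp add: Kapp_def b_def sum_subtractf)
  finally show ?thesis .
qed

end


context jchain_init
begin

definition "Mm T n = (\<Sum>x\<in>E. A T n x)"

lemma m_nn: "0 \<le> m n t" by (simp add: m_def sum_nonneg a_nn)
lemma A_nn: "0 \<le> A T n x" by (simp add: A_def sum_nonneg a_nn)
lemma Mm_nn: "0 \<le> Mm T n" by (simp add: Mm_def sum_nonneg A_nn)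

lemma Pj_le1: "pmf (Pj j x) y \<le> 1" by (rule pmf_le_1)

lemma b_nn: "0 \<le> b T n y" unfolding b_def using w_nn
  by (intro sum_nonneg mult_nonneg_nonneg a_nn) auto

lemma b_le: "b T n y \<le> w i * m n (T - 1)"
proof -
  have "b T n y \<le> (\<Sum>x\<in>E. a n x (T - 1) * w i)"
    unfolding b_def using w_nn a_nn Pj_le1
    by (intro sum_mono mult_left_mono) (auto intro: mult_left_le)
  then show ?thesis by (simp add: m_def sum_distrib_left mult.commute)
qed

lemma sum_b: "(\<Sum>y\<in>E. b T n y) = w i * m n (T - 1)"
proof -
  have "(\<Sum>y\<in>E. b T n y) = (\<Sum>x\<in>E. a n x (T - 1) * w i * (\<Sum>y\<in>E. pmf (Pj i x) y))"
    unfolding b_def by (subst sum.swap) (simp add: sum_distrib_left mult.assoc)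
  also have "\<dots> = (\<Sum>x\<in>E. a n x (T - 1) * w i)" using sum_pmf_E ilt by simp
  finally show ?thesis by (simp add: m_def sum_distrib_left mult.commute)
qed

lemma Mm_Suc: "1 \<le> T \<Longrightarrow> Mm T (Suc n) = Mm T n - w i * m n (T - 1)"
  unfolding Mm_def using A_Suc sum_Kapp[OF finE closedKj] sum_b
  by (simp add: sum_subtractf)

lemma Mm_0: "1 \<le> T \<Longrightarrow> Mm T 0 = 1"
proof -
  assume T: "1 \<le> T"
  have "A T 0 x = pmf init0 x" for x
  proof -
    have "A T 0 x = (\<Sum>t<T. if t = 0 then pmf init0 x else 0)" by (simp add: A_def a_0)
    also have "\<dots> = pmf init0 x" using T by (simp add: sum.delta)
    finally show ?thesis .
  qed
  then show ?thesis using init0E' finE by (simp add: Mm_def sum_pmf_eq_1)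
qed

lemma Mm_m: "Mm T n = (\<Sum>t<T. m n t)"
  unfolding Mm_def A_def m_def by (rule sum.swap)

lemma m_partial: "w i * (\<Sum>n<K. m n t) = 1 - Mm (Suc t) K"
proof (induction K)
  case 0 then show ?case using Mm_0[of "Suc t"] by simp
next
  case (Suc K)
  then show ?case using Mm_Suc[of "Suc t" K] by (simp add: algebra_simps)
qed

lemma wi_pos: "0 < w i" using w_pos ilt by simp

lemma m_summable: "summable (\<lambda>n. m n t)"
proof (rule summableI_nonneg_bounded)
  show "0 \<le> m n t" for n by (rule m_nn)
  show "sum (\<lambda>n. m n t) {..<K} \<le> 1 / w i" for K
  proof -
    have "w i * (\<Sum>n<K. m n t) \<le> 1" using m_partial[of t K] Mm_nn[of "Suc t" K] by simp
    then show ?thesis using wi_pos by (simp add: field_simps)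
  qed
qed

lemma Mm_lim0: "(\<lambda>K. Mm T K) \<longlonglongrightarrow> 0"
proof -
  have "(\<lambda>K. \<Sum>t<T. m K t) \<longlonglongrightarrow> (\<Sum>t<T. 0)"
    by (intro tendsto_sum summable_LIMSEQ_zero m_summable)
  then show ?thesis by (simp add: Mm_m)
qed

lemma m_suminf: "w i * (\<Sum>n. m n t) = 1"
proof -
  have "(\<lambda>K. w i * (\<Sum>n<K. m n t)) \<longlonglongrightarrow> w i * (\<Sum>n. m n t)"
    by (intro tendsto_mult_left summable_LIMSEQ m_summable)
  moreover have "(\<lambda>K. w i * (\<Sum>n<K. m n t)) \<longlonglongrightarrow> 1 - 0"
    unfolding m_partial by (intro tendsto_diff tendsto_const Mm_lim0)
  ultimately show ?thesis using LIMSEQ_unique by fastforce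
qed

lemma Mm_summable: "summable (\<lambda>n. Mm T n)"
  unfolding Mm_m by (intro summable_sum m_summable)

lemma A_le_Mm: "x \<in> E \<Longrightarrow> A T n x \<le> Mm T n"
  unfolding Mm_def using finE A_nn by (intro member_le_sum) auto

lemma A_zero_x: "x \<notin> E \<Longrightarrow> A T n x = 0"
  by (simp add: A_def a_zero_x)

lemma A_summable: "summable (\<lambda>n. A T n x)"
proof (cases "x \<in> E")
  case True
  show ?thesis
    by (rule summable_comparison_test[OF _ Mm_summable]) (use A_le_Mm[OF True] A_nn in auto)
next
  case False then show ?thesis by (simp add: A_zero_x)
qed

definition "nu T x = (\<Sum>n. A T n x)"

lemma nu_nn: "0 \<le> nu T x" unfolding nu_def by (intro suminf_nonneg A_summable A_nn)

lemma nu_zero: "x \<notin> E \<Longrightarrow> nu T x = 0" by (simp add: nu_def A_zero_x)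

lemma nu_mass: "(\<Sum>x\<in>E. nu T x) = real T / w i"
proof -
  have "(\<Sum>x\<in>E. nu T x) = (\<Sum>n. \<Sum>x\<in>E. A T n x)"
    unfolding nu_def by (rule suminf_sum[symmetric]) (rule A_summable)
  also have "\<dots> = (\<Sum>n. \<Sum>t<T. m n t)" by (simp add: Mm_def[symmetric] Mm_m)
  also have "\<dots> = (\<Sum>t<T. \<Sum>n. m n t)" by (rule suminf_sum) (rule m_summable)
  also have "\<dots> = (\<Sum>t<T. 1 / w i)"
    using m_suminf wi_pos by (intro sum.cong refl) (simp add: field_simps)
  finally show ?thesis by simp
qed

lemma b_summable: "summable (\<lambda>n. b T n y)"
  by (rule summable_comparison_test[of _ "\<lambda>n. w i * m n (T - 1)"])
     (use b_nn b_le in \<open>auto intro: summable_mult m_summable\<close>)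

definition "Bs T y = (\<Sum>n. b T n y)"

lemma Bs_bounds: "0 \<le> Bs T y \<and> Bs T y \<le> 1"
proof
  show "0 \<le> Bs T y" unfolding Bs_def by (intro suminf_nonneg b_summable b_nn)
  have "Bs T y \<le> (\<Sum>n. w i * m n (T - 1))"
    unfolding Bs_def by (intro suminf_le b_le b_summable summable_mult m_summable)
  also have "\<dots> = 1" using m_suminf by (simp add: suminf_mult m_summable)
  finally show "Bs T y \<le> 1" .
qed

lemma A0_bounds: "0 \<le> A T 0 y \<and> A T 0 y \<le> 1"
proof
  show "0 \<le> A T 0 y" by (rule A_nn)
  have "A T 0 y = (\<Sum>t<T. if t = 0 then pmf init0 y else 0)" by (simp add: A_def a_0)
  also have "\<dots> \<le> 1" by (simp add: sum.delta pmf_le_1)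
  finally show "A T 0 y \<le> 1" .
qed

lemma nu_near:
  assumes T: "1 \<le> T" and y: "y \<in> E"
  shows "Kapp E Kj (nu T) y - nu T y = Bs T y - A T 0 y"
proof -
  have s1: "(\<lambda>n. A T (Suc n) y) sums (nu T y - A T 0 y)"
    by (subst sums_Suc_iff) (simp add: nu_def summable_sums A_summable)
  have s2: "(\<lambda>n. Kapp E Kj (A T n) y - b T n y) sums (Kapp E Kj (nu T) y - Bs T y)"
    unfolding Kapp_def Bs_def
    by (intro sums_diff sums_sum sums_mult2 summable_sums b_summable)
       (simp add: nu_def summable_sums A_summable)
  have "(\<lambda>n. A T (Suc n) y) = (\<lambda>n. Kapp E Kj (A T n) y - b T n y)"
    using A_Suc[OF T] by auto
  with s1 s2 have "nu T y - A T 0 y = Kapp E Kj (nu T) y - Bs T y"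
    using sums_unique2 by metis
  then show ?thesis by simp
qed

end


context jchain
begin

definition "fr (r :: 'c \<Rightarrow> 's \<Rightarrow> 'a \<Rightarrow> ('c \<Rightarrow> 's \<Rightarrow> 'a \<Rightarrow> real) \<Rightarrow> real) x = r (cl i) (x i) (p i (x i)) (emp N cl p x)"

definition "GG r T = (\<lambda>((x, k), j). if j = i \<and> k < T then fr r x else 0)"

lemma emp_rho: "emp N cl p (rho x) = emp N cl p x"
proof -
  have "{j. j < N \<and> cl j = c \<and> rho x j = s \<and> p j (rho x j) = a} = {j. j < N \<and> cl j = c \<and> x j = s \<and> p j (x j) = a}" for c s a
    by (auto simp: rho_app)
  then show ?thesis by (simp add: emp_def fun_eq_iff)
qed

lemma fr_rho: "fr r (rho x) = fr r x"
  by (simp add: fr_def emp_rho rho_app ilt)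

lemma exp_rho:
  "measure_pmf.expectation (pair_pmf (dist N cl lam phi p i init n) (sel N cl lam)) (GG r T)
   = measure_pmf.expectation (pair_pmf (dist N cl lam phi p i (map_pmf rho init) n) (sel N cl lam)) (GG r T)"
proof -
  have "measure_pmf.expectation (pair_pmf (dist N cl lam phi p i init n) (sel N cl lam)) (GG r T)
      = measure_pmf.expectation (pair_pmf (dist N cl lam phi p i init n) (sel N cl lam)) (\<lambda>z. GG r T (apfst (apfst rho) z))"
    by (intro Bochner_Integration.integral_cong refl) (auto simp: GG_def fr_rho split: prod.splits)
  also have "\<dots> = measure_pmf.expectation (map_pmf (apfst (apfst rho)) (pair_pmf (dist N cl lam phi p i init n) (sel N cl lam))) (GG r T)"
    by (subst integral_map_pmf) (rule refl)
  also have "map_pmf (apfst (apfst rho)) (pair_pmf (dist N cl lam phi p i init n) (sel N cl lam))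
       = pair_pmf (dist N cl lam phi p i (map_pmf rho init) n) (sel N cl lam)"
    by (simp add: pair_map_pmf1[symmetric] dist_rho)
  finally show ?thesis .
qed

end

context jchain_init
begin

lemma exp_D:
  "measure_pmf.expectation (pair_pmf (D n) (sel N cl lam)) (GG r T) = w i * (\<Sum>x\<in>E. A T n x * fr r x)"
proof -
  have "measure_pmf.expectation (pair_pmf (D n) (sel N cl lam)) (GG r T)
      = (\<Sum>z\<in>(E \<times> {..n}) \<times> {..<N}. GG r T z * pmf (pair_pmf (D n) (sel N cl lam)) z)"
    by (rule integral_measure_pmf_real) (use D_supp[of n] finE in \<open>auto simp: set_sel\<close>)
  also have "\<dots> = (\<Sum>xk\<in>E \<times> {..n}. \<Sum>j<N. GG r T (xk, j) * pmf (pair_pmf (D n) (sel N cl lam)) (xk, j))"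
    by (simp add: sum.cartesian_product split_beta)
  also have "\<dots> = (\<Sum>(x, k)\<in>E \<times> {..n}. \<Sum>j<N. GG r T ((x, k), j) * (a n x k * w j))"
    by (intro sum.cong refl) (auto simp: pmf_pair a_def pmf_sel)
  also have "\<dots> = (\<Sum>x\<in>E. \<Sum>k\<le>n. (if k \<in> {..<T} then w i * fr r x * a n x k else 0))"
  proof -
    have "(\<Sum>j<N. GG r T ((x, k), j) * (a n x k * w j)) = (if k \<in> {..<T} then w i * fr r x * a n x k else 0)" for x k
    proof -
      have "(\<Sum>j<N. GG r T ((x, k), j) * (a n x k * w j)) = (\<Sum>j<N. if j = i then (if k < T then fr r x * (a n x k * w j) else 0) else 0)"
        by (intro sum.cong refl) (auto simp: GG_def)
      also have "\<dots> = (if k < T then fr r x * (a n x k * w i) else 0)" using ilt by (simp add: sum.delta)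
      finally show ?thesis by auto
    qed
    then show ?thesis by (simp add: sum.cartesian_product[symmetric])
  qed
  also have "\<dots> = (\<Sum>x\<in>E. w i * fr r x * A T n x)"
  proof (rule sum.cong[OF refl])
    fix x
    show "(\<Sum>k\<le>n. (if k \<in> {..<T} then w i * fr r x * a n x k else 0)) = w i * fr r x * A T n x"
      using sum_cut[of n "\<lambda>k. w i * fr r x * a n x k" "{..<T}"] a_zero_k
      by (simp add: A_def sum_distrib_left)
  qed
  finally show ?thesis by (simp add: sum_distrib_left mult.commute mult.left_commute)
qed

lemma reward_D:
  "(\<Sum>n. measure_pmf.expectation (pair_pmf (D n) (sel N cl lam)) (GG r T)) = w i * (\<Sum>x\<in>E. nu T x * fr r x)"
proof -
  have "(\<Sum>n. measure_pmf.expectation (pair_pmf (D n) (sel N cl lam)) (GG r T)) = (\<Sum>n. w i * (\<Sum>x\<in>E. A T n x * fr r x))"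
    by (simp add: exp_D)
  also have "\<dots> = w i * (\<Sum>n. \<Sum>x\<in>E. A T n x * fr r x)"
    by (intro suminf_mult summable_sum summable_mult2 A_summable)
  also have "(\<Sum>n. \<Sum>x\<in>E. A T n x * fr r x) = (\<Sum>x\<in>E. \<Sum>n. A T n x * fr r x)"
    by (intro suminf_sum summable_mult2 A_summable)
  also have "\<dots> = (\<Sum>x\<in>E. nu T x * fr r x)"
    unfolding nu_def by (intro sum.cong refl suminf_mult2[symmetric] A_summable)
  finally show ?thesis .
qed

end


context jchain
begin

lemma Kapp_scale: "Kapp E' K (\<lambda>x. c * f x) y = c * Kapp E' K f y"
  by (simp add: Kapp_def sum_distrib_left mult.assoc)

lemma Jpay_formula:
  fixes r :: "'c \<Rightarrow> 's \<Rightarrow> 'a \<Rightarrow> ('c \<Rightarrow> 's \<Rightarrow> 'a \<Rightarrow> real) \<Rightarrow> real"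
  assumes init_ok: "\<forall>x\<in>set_pmf init. \<forall>j<N. x j \<in> S (cl j)"
    and reach: "\<forall>x\<in>E. (x, z) \<in> {(x, y). y \<in> set_pmf (Kj x)}\<^sup>*"
    and st: "statv E Kj \<pi>"
  shows "Jpay N cl lam phi r p init i = (\<Sum>x\<in>E. \<pi> x * fr r x)"
proof -
  have i0: "set_pmf (map_pmf rho init) \<subseteq> PiE {..<N} (\<lambda>j. S (cl j))"
    using init_ok by (auto simp: rho_def) (metis (full_types))
  interpret J: jchain_init N cl lam phi p i S "map_pmf rho init"
    by unfold_locales (rule i0)
  have GGeq: "(\<lambda>((x, k), j). if j = i \<and> k < T then r (cl i) (x i) (p i (x i)) (emp N cl p x) else 0) = GG r T" for T
    unfolding GG_def fr_def by (rule refl)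
  have RU: "reward_upto N cl lam phi r p init i T = w i * (\<Sum>x\<in>E. J.nu T x * fr r x)" for T
    unfolding reward_upto_def GGeq exp_rho J.D_def[symmetric] by (rule J.reward_D)
  define vv where "vv = (\<lambda>n x. (w i / real (Suc n)) * J.nu (Suc n) x)"
  have prob: "\<forall>n. probv E (vv n)"
  proof
    fix n
    have "sum (vv n) E = (w i / real (Suc n)) * (real (Suc n) / w i)"
      unfolding vv_def by (simp only: sum_distrib_left[symmetric] J.nu_mass)
    also have "\<dots> = 1" using J.wi_pos by simp
    finally show "probv E (vv n)"
      unfolding probv_def vv_def using J.wi_pos J.nu_nn J.nu_zero by auto
  qed
  have near: "\<forall>y\<in>E. (\<lambda>n. Kapp E Kj (vv n) y - vv n y) \<longlonglongrightarrow> 0"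
  proof
    fix y assume y: "y \<in> E"
    have eq: "Kapp E Kj (vv n) y - vv n y = (w i / real (Suc n)) * (J.Bs (Suc n) y - J.A (Suc n) 0 y)" for n
      unfolding vv_def Kapp_scale using J.nu_near[of "Suc n" y] y by (simp add: right_diff_distrib[symmetric] diff_divide_distrib[symmetric])
    show "(\<lambda>n. Kapp E Kj (vv n) y - vv n y) \<longlonglongrightarrow> 0"
      unfolding eq
    proof (rule Lim_null_comparison)
      show "(\<lambda>n. w i * inverse (real (Suc n))) \<longlonglongrightarrow> 0"
        using tendsto_mult_left[OF LIMSEQ_inverse_real_of_nat, of "w i"] by simp
      show "\<forall>\<^sub>F n in sequentially. norm (w i / real (Suc n) * (J.Bs (Suc n) y - J.A (Suc n) 0 y)) \<le> w i * inverse (real (Suc n))"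
      proof (intro always_eventually allI)
        fix n
        have "\<bar>J.Bs (Suc n) y - J.A (Suc n) 0 y\<bar> \<le> 1"
          using J.Bs_bounds[of "Suc n" y] J.A0_bounds[of "Suc n" y] by linarith
        then show "norm (w i / real (Suc n) * (J.Bs (Suc n) y - J.A (Suc n) 0 y)) \<le> w i * inverse (real (Suc n))"
          using J.wi_pos by (simp add: abs_mult divide_inverse mult_left_le)
      qed
    qed
  qed
  have Rel: "\<And>x y. x \<in> E \<Longrightarrow> (x, y) \<in> {(x, y). y \<in> set_pmf (Kj x)} \<Longrightarrow> y \<in> set_pmf (Kj x)" by auto
  obtain \<pi>' where st': "statv E Kj \<pi>'" and lim: "\<forall>y. (\<lambda>n. vv n y) \<longlonglongrightarrow> \<pi>' y"
    using conv_stat[OF finE closedKj Rel reach prob near] by blast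
  have "\<pi>' = \<pi>" by (rule stat_unique[OF finE closedKj Rel reach st' st])
  have lim2: "(\<lambda>n. reward_upto N cl lam phi r p init i (Suc n) / real (Suc n)) \<longlonglongrightarrow> (\<Sum>x\<in>E. \<pi> x * fr r x)"
  proof -
    have "(\<lambda>n. reward_upto N cl lam phi r p init i (Suc n) / real (Suc n)) = (\<lambda>n. \<Sum>x\<in>E. vv n x * fr r x)"
      by (simp add: RU vv_def sum_distrib_left sum_divide_distrib mult.assoc)
    moreover have "(\<lambda>n. \<Sum>x\<in>E. vv n x * fr r x) \<longlonglongrightarrow> (\<Sum>x\<in>E. \<pi> x * fr r x)"
      using lim \<open>\<pi>' = \<pi>\<close> by (intro tendsto_sum tendsto_mult_right) auto
    ultimately show ?thesis by simp
  qed
  then have "(\<lambda>T. reward_upto N cl lam phi r p init i T / real T) \<longlonglongrightarrow> (\<Sum>x\<in>E. \<pi> x * fr r x)"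
    by (rule LIMSEQ_imp_Suc)
  then show ?thesis unfolding Jpay_def by (rule limI)
qed

end


lemma fun_upd_upd_eta: "fun_upd (f(j := y)) j = fun_upd f j"
  by (auto simp: fun_eq_iff)

lemma upd_stat_pmf:
  fixes A :: "'s pmf" and B :: "(nat \<Rightarrow> 's) pmf"
  assumes st: "bind_pmf A K = A"
  shows "bind_pmf (map_pmf (\<lambda>(y, f). f(j := y)) (pair_pmf A B)) (\<lambda>x. map_pmf (\<lambda>s'. x(j := s')) (K (x j)))
       = map_pmf (\<lambda>(y, f). f(j := y)) (pair_pmf A B)"
proof -
  have "bind_pmf (map_pmf (\<lambda>(y, f). f(j := y)) (pair_pmf A B)) (\<lambda>x. map_pmf (\<lambda>s'. x(j := s')) (K (x j)))
      = bind_pmf A (\<lambda>y. bind_pmf B (\<lambda>f. map_pmf (\<lambda>s'. f(j := s')) (K y)))"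
    by (simp add: bind_map_pmf pair_pmf_def bind_assoc_pmf bind_return_pmf fun_upd_upd_eta)
  also have "\<dots> = bind_pmf A (\<lambda>y. bind_pmf (K y) (\<lambda>s'. bind_pmf B (\<lambda>f. return_pmf (f(j := s')))))"
    by (simp add: map_pmf_def bind_commute_pmf[of B])
  also have "\<dots> = map_pmf (\<lambda>(y, f). f(j := y)) (pair_pmf (bind_pmf A K) B)"
    by (simp add: map_pmf_def pair_pmf_def bind_assoc_pmf bind_return_pmf)
  finally show ?thesis using st by simp
qed

locale jchain_eta = jchain +
  fixes et :: "nat \<Rightarrow> _ \<Rightarrow> real"
  assumes et_stat: "\<forall>j<N. statv (S (cl j)) (\<lambda>s. phi (cl j) s (p j s)) (et j)"
    and et_reach: "\<forall>j<N. \<exists>z\<in>S (cl j). \<forall>s\<in>S (cl j). (s, z) \<in> (step_rel S phi (cl j) (p j))\<^sup>*"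
begin

definition "etp j = embed_pmf (et j)"
definition "PP = Pi_pmf {..<N} undefined etp"

lemma pmf_etp: "j < N \<Longrightarrow> pmf (etp j) s = et j s"
  unfolding etp_def using et_stat finS
  by (intro pmf_embed_fin[where B = "S (cl j)"]) (auto simp: statv_def probv_def)

lemma set_etp: "j < N \<Longrightarrow> set_pmf (etp j) \<subseteq> S (cl j)"
  using pmf_etp et_stat by (auto simp: set_pmf_eq statv_def probv_def)

lemma etp_stat: "j < N \<Longrightarrow> bind_pmf (etp j) (\<lambda>s. phi (cl j) s (p j s)) = etp j"
proof (rule pmf_eqI)
  fix y assume j: "j < N"
  have cl: "closedK (S (cl j)) (\<lambda>s. phi (cl j) s (p j s))" using closed j by (auto simp: closedK_def)
  show "pmf (bind_pmf (etp j) (\<lambda>s. phi (cl j) s (p j s))) y = pmf (etp j) y"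
  proof (cases "y \<in> S (cl j)")
    case True
    have "pmf (bind_pmf (etp j) (\<lambda>s. phi (cl j) s (p j s))) y = Kapp (S (cl j)) (\<lambda>s. phi (cl j) s (p j s)) (pmf (etp j)) y"
      using Kapp_pmf[OF _ set_etp[OF j]] finS by simp
    also have "\<dots> = Kapp (S (cl j)) (\<lambda>s. phi (cl j) s (p j s)) (et j) y"
      unfolding Kapp_def using pmf_etp[OF j] by simp
    also have "\<dots> = et j y" using et_stat j True by (auto simp: statv_def)
    finally show ?thesis using pmf_etp[OF j] by simp
  next
    case False
    have "y \<notin> set_pmf (bind_pmf (etp j) (\<lambda>s. phi (cl j) s (p j s)))"
      using False set_etp[OF j] cl by (auto simp: closedK_def)
    moreover have "y \<notin> set_pmf (etp j)" using False set_etp[OF j] by auto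
    ultimately show ?thesis by (metis pmf_eq_0_set_pmf)
  qed
qed

lemma PP_split: "j < N \<Longrightarrow> PP = map_pmf (\<lambda>(y, f). f(j := y)) (pair_pmf (etp j) (Pi_pmf ({..<N} - {j}) undefined etp))"
proof -
  assume j: "j < N"
  have "{..<N} = insert j ({..<N} - {j})" using j by auto
  then show ?thesis unfolding PP_def by (metis Pi_pmf_insert finite_Diff finite_lessThan Diff_iff singletonI)
qed

lemma PP_stat_j: "j < N \<Longrightarrow> bind_pmf PP (Pj j) = PP"
proof -
  assume j: "j < N"
  have "Pj j = (\<lambda>x. map_pmf (\<lambda>s'. x(j := s')) ((\<lambda>s. phi (cl j) s (p j s)) (x j)))"
    by (simp add: Pj_def fun_eq_iff)
  then show ?thesis
    using upd_stat_pmf[OF etp_stat[OF j], of j "Pi_pmf ({..<N} - {j}) undefined etp"] PP_split[OF j]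
    by simp
qed

lemma PP_stat: "bind_pmf PP Kj = PP"
proof -
  have "bind_pmf PP Kj = bind_pmf (sel N cl lam) (\<lambda>j. bind_pmf PP (Pj j))"
    unfolding Kj_def by (rule bind_commute_pmf)
  also have "\<dots> = bind_pmf (sel N cl lam) (\<lambda>j. PP)"
    by (intro bind_pmf_cong refl) (simp add: set_sel PP_stat_j)
  finally show ?thesis by simp
qed

lemma set_PP: "set_pmf PP \<subseteq> E"
proof
  fix x assume "x \<in> set_pmf PP"
  then have "x \<in> PiE_dflt {..<N} undefined (set_pmf \<circ> etp)" unfolding PP_def by (simp add: set_Pi_pmf)
  then show "x \<in> E" using set_etp by (auto simp: PiE_dflt_def E_def PiE_iff extensional_def)
qed

lemma PP_statv: "statv E Kj (pmf PP)"
  unfolding statv_def probv_def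
proof (intro conjI allI impI ballI)
  show "0 \<le> pmf PP x" for x by simp
  show "pmf PP x = 0" if "x \<notin> E" for x using that set_PP by (auto simp: pmf_eq_0_set_pmf)
  show "sum (pmf PP) E = 1" using set_PP finE by (simp add: sum_pmf_eq_1)
  show "Kapp E Kj (pmf PP) y = pmf PP y" for y using Kapp_pmf[OF finE set_PP] PP_stat by simp
qed

lemma step_joint:
  assumes x: "x \<in> E" and j: "j < N" and st: "(x j, t) \<in> step_rel S phi (cl j) (p j)"
  shows "(x, x(j := t)) \<in> {(x, y). y \<in> set_pmf (Kj x)}"
proof -
  have "t \<in> set_pmf (phi (cl j) (x j) (p j (x j)))" using st by (auto simp: step_rel_def pmf_positive_iff)
  then have "x(j := t) \<in> set_pmf (Pj j x)" by (auto simp: Pj_def)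
  then show ?thesis using j by (auto simp: Kj_def set_sel)
qed

lemma path_joint:
  assumes x: "x \<in> E" and j: "j < N" and st: "(x j, t) \<in> (step_rel S phi (cl j) (p j))\<^sup>*"
  shows "(x, x(j := t)) \<in> {(x, y). y \<in> set_pmf (Kj x)}\<^sup>* \<and> x(j := t) \<in> E"
  using st
proof (induction rule: rtrancl_induct)
  case base
  then show ?case using x by simp
next
  case (step t t')
  have tS: "t \<in> S (cl j)" using step(2) by (auto simp: step_rel_def)
  have t'S: "t' \<in> S (cl j)" using step(2) closed j tS by (auto simp: step_rel_def pmf_positive_iff)
  have "(x(j := t), (x(j := t))(j := t')) \<in> {(x, y). y \<in> set_pmf (Kj x)}"
    by (rule step_joint) (use step x j upd_E tS in auto)
  then have s2: "(x(j := t), x(j := t')) \<in> {(x, y). y \<in> set_pmf (Kj x)}" by simp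
  have s1: "(x, x(j := t)) \<in> {(x, y). y \<in> set_pmf (Kj x)}\<^sup>*" using step by blast
  show ?case using rtrancl_into_rtrancl[OF s1 s2] upd_E[OF x j t'S] by blast
qed

lemma joint_reach: "\<exists>z\<in>E. \<forall>x\<in>E. (x, z) \<in> {(x, y). y \<in> set_pmf (Kj x)}\<^sup>*"
proof -
  have "\<forall>j. \<exists>z. j < N \<longrightarrow> z \<in> S (cl j) \<and> (\<forall>s\<in>S (cl j). (s, z) \<in> (step_rel S phi (cl j) (p j))\<^sup>*)"
    using et_reach by metis
  then obtain zs where zs: "\<And>j. j < N \<Longrightarrow> zs j \<in> S (cl j) \<and> (\<forall>s\<in>S (cl j). (s, zs j) \<in> (step_rel S phi (cl j) (p j))\<^sup>*)"
    by metis
  define upd where "upd = (\<lambda>M x l. if l < M then zs l else x l)"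
  have U: "(x, upd M x) \<in> {(x, y). y \<in> set_pmf (Kj x)}\<^sup>* \<and> upd M x \<in> E" if x: "x \<in> E" and M: "M \<le> N" for x M
    using M
  proof (induction M)
    case 0 then show ?case using x by (simp add: upd_def)
  next
    case (Suc M)
    then have IH: "(x, upd M x) \<in> {(x, y). y \<in> set_pmf (Kj x)}\<^sup>*" "upd M x \<in> E" and MN: "M < N" by auto
    have eq: "upd (Suc M) x = (upd M x)(M := zs M)" by (auto simp: upd_def fun_eq_iff)
    have "upd M x M = x M" by (simp add: upd_def)
    moreover have "x M \<in> S (cl M)" using x MN by (auto simp: E_def PiE_iff)
    ultimately have "(upd M x M, zs M) \<in> (step_rel S phi (cl M) (p M))\<^sup>*" using zs[OF MN] by auto
    from path_joint[OF IH(2) MN this]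
    have P1: "(upd M x, (upd M x)(M := zs M)) \<in> {(x, y). y \<in> set_pmf (Kj x)}\<^sup>*" and P2: "(upd M x)(M := zs M) \<in> E"
      by blast+
    show ?case unfolding eq using rtrancl_trans[OF IH(1) P1] P2 by blast
  qed
  define z where "z = (\<lambda>l. if l < N then zs l else undefined)"
  have "upd N x = z" if "x \<in> E" for x using that by (auto simp: upd_def z_def fun_eq_iff E_def PiE_iff extensional_def)
  moreover have "z \<in> E" using zs by (auto simp: z_def E_def PiE_iff extensional_def)
  ultimately show ?thesis using U by (metis order_refl)
qed

lemma Jpay_PP:
  fixes r :: "_ \<Rightarrow> _ \<Rightarrow> _ \<Rightarrow> (_ \<Rightarrow> _ \<Rightarrow> _ \<Rightarrow> real) \<Rightarrow> real"
  assumes init_ok: "\<forall>x\<in>set_pmf init. \<forall>j<N. x j \<in> S (cl j)"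
  shows "Jpay N cl lam phi r p init i = measure_pmf.expectation PP (fr r)"
proof -
  obtain z where "\<forall>x\<in>E. (x, z) \<in> {(x, y). y \<in> set_pmf (Kj x)}\<^sup>*" using joint_reach by auto
  from Jpay_formula[OF init_ok this PP_statv]
  have "Jpay N cl lam phi r p init i = (\<Sum>x\<in>E. pmf PP x * fr r x)" .
  also have "\<dots> = measure_pmf.expectation PP (fr r)"
    by (subst integral_measure_pmf_real[OF finE]) (use set_PP in \<open>auto simp: mult.commute\<close>)
  finally show ?thesis .
qed

end


context jchain_eta
begin

definition "EP g = (\<Sum>e\<in>E. pmf PP e * g e)"

lemma EP_expect: "EP g = measure_pmf.expectation PP g"
  unfolding EP_def by (subst integral_measure_pmf_real[OF finE]) (use set_PP in \<open>auto simp: mult.commute\<close>)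

lemma EP_sum: "EP (\<lambda>e. \<Sum>j\<in>J. g j e) = (\<Sum>j\<in>J. EP (g j))"
  unfolding EP_def by (subst sum.swap) (simp add: sum_distrib_left)

lemma EP_lin: "EP (\<lambda>e. a * f e + b * g e) = a * EP f + b * EP g"
  unfolding EP_def by (simp add: sum.distrib sum_distrib_left algebra_simps)

lemma EP_const: "EP (\<lambda>e. c) = c"
  unfolding EP_def using set_PP finE by (simp add: sum_distrib_right[symmetric] sum_pmf_eq_1)

lemma EP_mono: "(\<And>e. e \<in> E \<Longrightarrow> f e \<le> g e) \<Longrightarrow> EP f \<le> EP g"
  unfolding EP_def by (intro sum_mono mult_left_mono) auto

lemma EP_coord_exp:
  assumes j: "j < N"
  shows "EP (\<lambda>e. h (e j)) = measure_pmf.expectation (etp j) h"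
proof -
  have "EP (\<lambda>e. h (e j)) = measure_pmf.expectation (map_pmf (\<lambda>e. e j) PP) h"
    by (simp add: EP_expect)
  also have "map_pmf (\<lambda>e. e j) PP = etp j" using j by (simp add: PP_def Pi_pmf_component)
  finally show ?thesis .
qed

lemma EP_coord:
  assumes j: "j < N"
  shows "EP (\<lambda>e. h (e j)) = (\<Sum>t\<in>S (cl j). et j t * h t)"
proof -
  have "EP (\<lambda>e. h (e j)) = measure_pmf.expectation (map_pmf (\<lambda>e. e j) PP) h"
    by (simp add: EP_expect)
  also have "map_pmf (\<lambda>e. e j) PP = etp j" using j by (simp add: PP_def Pi_pmf_component)
  also have "measure_pmf.expectation (etp j) h = (\<Sum>t\<in>S (cl j). h t * pmf (etp j) t)"
    by (rule integral_measure_pmf_real) (use finS set_etp[OF j] in auto)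
  finally show ?thesis using pmf_etp[OF j] by (simp add: mult.commute)
qed

lemma EP_pair:
  assumes j: "j < N" and l: "l < N" and jl: "j \<noteq> l"
    and fg: "\<And>t. 0 \<le> f t" "\<And>t. 0 \<le> g t"
  shows "EP (\<lambda>e. f (e j) * g (e l)) = EP (\<lambda>e. f (e j)) * EP (\<lambda>e. g (e l))"
proof -
  define F where "F = (\<lambda>x t. if x = j then f t else if x = l then g t else 1)"
  have prodF: "(\<Prod>x\<in>{..<N}. F x (e x)) = f (e j) * g (e l)" for e
  proof -
    have "(\<Prod>x\<in>{..<N}. F x (e x)) = (\<Prod>x\<in>{..<N}. (if x = j then f (e j) else 1) * (if x = l then g (e l) else 1))"
      by (intro prod.cong refl) (use jl in \<open>auto simp: F_def\<close>)
    also have "\<dots> = f (e j) * g (e l)" using j l by (simp add: prod.distrib prod.delta)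
    finally show ?thesis .
  qed
  have intF: "measure_pmf.expectation (etp x) (F x) = (if x = j then measure_pmf.expectation (etp j) f else 1) *
      (if x = l then measure_pmf.expectation (etp l) g else 1)" for x
    using jl by (auto simp: F_def)
  have "EP (\<lambda>e. f (e j) * g (e l)) = measure_pmf.expectation PP (\<lambda>e. \<Prod>x\<in>{..<N}. F x (e x))"
    by (simp add: EP_expect prodF)
  also have "\<dots> = (\<Prod>x\<in>{..<N}. measure_pmf.expectation (etp x) (F x))"
    unfolding PP_def
    by (rule expectation_prod_Pi_pmf) (use fg finS set_etp in \<open>auto simp: F_def intro!: integrable_measure_pmf_finite intro: finite_subset[OF set_etp]\<close>)
  also have "\<dots> = measure_pmf.expectation (etp j) f * measure_pmf.expectation (etp l) g"
    unfolding intF using j l by (simp add: prod.distrib prod.delta)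
  also have "measure_pmf.expectation (etp j) f = EP (\<lambda>e. f (e j))"
    using EP_coord_exp[OF j] by simp
  also have "measure_pmf.expectation (etp l) g = EP (\<lambda>e. g (e l))"
    using EP_coord_exp[OF l] by simp
  finally show ?thesis .
qed

end


context jchain_eta
begin

definition "ZZ c s a j t = (if cl j = c \<and> t = s \<and> p j t = a then 1 else (0::real))"

lemma emp_ZZ: "emp N cl p e c s a = (\<Sum>j<N. ZZ c s a j (e j)) / real N"
proof -
  have "real (card {j. j < N \<and> cl j = c \<and> e j = s \<and> p j (e j) = a})
      = real (card {j \<in> {..<N}. cl j = c \<and> e j = s \<and> p j (e j) = a})"
    by (simp add: conj_commute)
  also have "\<dots> = (\<Sum>j\<in>{j \<in> {..<N}. cl j = c \<and> e j = s \<and> p j (e j) = a}. 1)" by simp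
  also have "\<dots> = (\<Sum>j<N. ZZ c s a j (e j))"
    by (subst sum.inter_filter) (auto simp: ZZ_def intro!: sum.cong)
  finally show ?thesis by (simp add: emp_def)
qed

lemma ZZ_01: "0 \<le> ZZ c s a j t" "ZZ c s a j t \<le> 1" "ZZ c s a j t * ZZ c s a j t = ZZ c s a j t"
  by (auto simp: ZZ_def)

lemma EP_abs: "\<bar>EP f\<bar> \<le> EP (\<lambda>e. \<bar>f e\<bar>)"
  unfolding EP_def by (rule order_trans[OF sum_abs]) (simp add: abs_mult)

lemma EP_ZZ: "j < N \<Longrightarrow> EP (\<lambda>e. ZZ c s a j (e j)) = (if cl j = c \<and> p j s = a then et j s else 0)"
proof -
  assume j: "j < N"
  have "EP (\<lambda>e. ZZ c s a j (e j)) = (\<Sum>t\<in>S (cl j). et j t * ZZ c s a j t)" by (rule EP_coord[OF j])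
  also have "\<dots> = (\<Sum>t\<in>S (cl j). if t = s then (if cl j = c \<and> p j s = a then et j s else 0) else 0)"
    by (intro sum.cong refl) (auto simp: ZZ_def)
  also have "\<dots> = (if cl j = c \<and> p j s = a then et j s else 0)"
    using finS et_stat j by (auto simp: sum.delta statv_def probv_def)
  finally show ?thesis .
qed

lemma EP_sq:
  "EP (\<lambda>e. (\<Sum>j<N. ZZ c s a j (e j))\<^sup>2) \<le> (\<Sum>j<N. EP (\<lambda>e. ZZ c s a j (e j)))\<^sup>2 + real N"
proof -
  let ?z = "\<lambda>j. EP (\<lambda>e. ZZ c s a j (e j))"
  have "EP (\<lambda>e. (\<Sum>j<N. ZZ c s a j (e j))\<^sup>2) = EP (\<lambda>e. \<Sum>j<N. \<Sum>l<N. ZZ c s a j (e j) * ZZ c s a l (e l))"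
    by (simp add: power2_eq_square sum_product)
  also have "\<dots> = (\<Sum>j<N. \<Sum>l<N. EP (\<lambda>e. ZZ c s a j (e j) * ZZ c s a l (e l)))"
    by (simp add: EP_sum)
  also have "\<dots> \<le> (\<Sum>j<N. \<Sum>l<N. ?z j * ?z l + (if j = l then 1 else 0))"
  proof (intro sum_mono)
    fix j l assume j: "j \<in> {..<N}" and l: "l \<in> {..<N}"
    show "EP (\<lambda>e. ZZ c s a j (e j) * ZZ c s a l (e l)) \<le> ?z j * ?z l + (if j = l then 1 else 0)"
    proof (cases "j = l")
      case True
      have "EP (\<lambda>e. ZZ c s a j (e j) * ZZ c s a l (e l)) \<le> EP (\<lambda>e. 1)"
        using True by (intro EP_mono) (simp add: ZZ_01)
      then have h1: "EP (\<lambda>e. ZZ c s a j (e j) * ZZ c s a l (e l)) \<le> 1" by (simp add: EP_const)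
      have h2: "0 \<le> ?z j * ?z l" using True by simp
      from h1 h2 True show ?thesis by (simp only: if_True refl)
    next
      case False
      then show ?thesis using EP_pair[of j l "ZZ c s a j" "ZZ c s a l"] j l ZZ_01 by simp
    qed
  qed
  also have "\<dots> = (\<Sum>j<N. ?z j)\<^sup>2 + real N"
    by (simp add: sum.distrib power2_eq_square sum_product)
  finally show ?thesis .
qed

lemma EP_var:
  "EP (\<lambda>e. (emp N cl p e c s a - mm)\<^sup>2) \<le> ((\<Sum>j<N. EP (\<lambda>e. ZZ c s a j (e j))) / real N - mm)\<^sup>2 + 1 / real N"
proof -
  let ?X = "\<lambda>e. \<Sum>j<N. ZZ c s a j (e j)"
  let ?z = "\<Sum>j<N. EP (\<lambda>e. ZZ c s a j (e j))"
  have Npos': "0 < real N" using Npos by simp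
  have feq: "(\<lambda>e. (emp N cl p e c s a - mm)\<^sup>2) = (\<lambda>e. (1 / (real N)\<^sup>2) * (?X e)\<^sup>2 + 1 * ((- 2 * mm / real N) * ?X e + mm\<^sup>2 * 1))"
    using Npos' by (auto simp: emp_ZZ fun_eq_iff power2_eq_square field_simps)
  have e1: "EP (\<lambda>e. (1 / (real N)\<^sup>2) * (?X e)\<^sup>2 + 1 * ((- 2 * mm / real N) * ?X e + mm\<^sup>2 * 1))
      = (1 / (real N)\<^sup>2) * EP (\<lambda>e. (?X e)\<^sup>2) + 1 * EP (\<lambda>e. (- 2 * mm / real N) * ?X e + mm\<^sup>2 * 1)"
    by (rule EP_lin)
  have e2: "EP (\<lambda>e. (- 2 * mm / real N) * ?X e + mm\<^sup>2 * 1) = (- 2 * mm / real N) * EP ?X + mm\<^sup>2 * EP (\<lambda>e. 1)"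
    by (rule EP_lin)
  have e3: "EP ?X = ?z" by (rule EP_sum)
  have "EP (\<lambda>e. (emp N cl p e c s a - mm)\<^sup>2) = (1 / (real N)\<^sup>2) * EP (\<lambda>e. (?X e)\<^sup>2) + (- 2 * mm / real N) * ?z + mm\<^sup>2"
    unfolding feq e1 e2 e3 EP_const by simp
  also have "\<dots> \<le> (1 / (real N)\<^sup>2) * (?z\<^sup>2 + real N) + (- 2 * mm / real N) * ?z + mm\<^sup>2"
    using EP_sq[of c s a] by (intro add_right_mono mult_left_mono) auto
  also have "\<dots> = (?z / real N - mm)\<^sup>2 + 1 / real N"
    using Npos' by (simp add: power2_eq_square field_simps)
  finally show ?thesis .
qed

end


lemma cont_nth: "continuous_on UNIV (\<lambda>x::real^'n. x $ k)"
  by (intro continuous_intros)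

lemma finite_delta:
  assumes "finite T" and "\<forall>t\<in>T. \<exists>d>0. P t d" and mono: "\<And>t d d'. 0 < d' \<Longrightarrow> d' \<le> d \<Longrightarrow> P t d \<Longrightarrow> P t d'"
  shows "\<exists>d>0. \<forall>t\<in>T. P t (d::real)"
  using assms(1,2)
proof (induction T rule: finite_induct)
  case empty then show ?case by (intro exI[of _ 1]) auto
next
  case (insert t T)
  then obtain d where d: "d > 0" "\<forall>t\<in>T. P t d" by auto
  obtain d' where d': "d' > 0" "P t d'" using insert by auto
  have m: "0 < min d d'" using d d' by simp
  have "\<forall>t'\<in>T. P t' (min d d')" using d(2) m mono by (meson min.cobounded1)
  moreover have "P t (min d d')" using d'(2) m mono by (meson min.cobounded2)
  ultimately show ?case using m by blast
qed

lemma finite_bound: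
  assumes "finite T" and "\<forall>t\<in>T. \<exists>B. P t B" and mono: "\<And>t B B'. B \<le> B' \<Longrightarrow> P t B \<Longrightarrow> P t B'"
  shows "\<exists>B. \<forall>t\<in>T. P t (B::real)"
  using assms(1,2)
proof (induction T rule: finite_induct)
  case empty then show ?case by auto
next
  case (insert t T)
  then obtain B where B: "\<forall>t\<in>T. P t B" by auto
  obtain B' where B': "P t B'" using insert by auto
  have "\<forall>t'\<in>T. P t' (max B B')" using B mono by (meson max.cobounded1)
  moreover have "P t (max B B')" using B' mono by (meson max.cobounded2)
  ultimately show ?case by auto
qed

definition Dsq :: "('c::finite \<Rightarrow> 's::finite \<Rightarrow> 'a::finite \<Rightarrow> real) \<Rightarrow> ('c \<Rightarrow> 's \<Rightarrow> 'a \<Rightarrow> real) \<Rightarrow> real" where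
  "Dsq \<nu> \<nu>' = (\<Sum>k\<in>UNIV. (\<nu> (fst k) (fst (snd k)) (snd (snd k)) - \<nu>' (fst k) (fst (snd k)) (snd (snd k)))\<^sup>2)"

lemma dist_vecSA: "dist_class.dist (vecSA \<nu>) (vecSA \<nu>') = sqrt (Dsq \<nu> \<nu>')"
  by (simp add: dist_vec_def L2_set_def Dsq_def vecSA_def dist_real_def)

lemma Dsq_nn: "0 \<le> Dsq \<nu> \<nu>'" by (simp add: Dsq_def sum_nonneg)

lemma XSA_compact:
  fixes S :: "'c::finite \<Rightarrow> 's::finite set" and A :: "'c \<Rightarrow> 's \<Rightarrow> 'a::finite set"
  assumes mpos: "\<forall>c. 0 < m c"
  shows "compact (vecSA ` XSA S A m)"
proof -
  define Bad where "Bad = {k::'c \<times> 's \<times> 'a. fst (snd k) \<notin> S (fst k) \<or> snd (snd k) \<notin> Acl S A (fst k)}"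
  define Ks where "Ks = {x::real^('c \<times> 's \<times> 'a). \<forall>k. 0 \<le> x $ k} \<inter> (\<Inter>k\<in>Bad. {x. x $ k = 0}) \<inter>
     (\<Inter>c. {x. (\<Sum>s\<in>S c. \<Sum>a\<in>Acl S A c. x $ (c, s, a)) = m c})"
  have eq: "vecSA ` XSA S A m = Ks"
  proof
    show "vecSA ` XSA S A m \<subseteq> Ks"
      by (auto simp: Ks_def Bad_def XSA_def vecSA_def)
    show "Ks \<subseteq> vecSA ` XSA S A m"
    proof
      fix x assume x: "x \<in> Ks"
      define \<nu> where "\<nu> = (\<lambda>c s a. x $ (c, s, a))"
      have "vecSA \<nu> = x" by (simp add: vecSA_def \<nu>_def vec_eq_iff)
      moreover have "\<nu> \<in> XSA S A m"
        using x unfolding XSA_def Ks_def Bad_def \<nu>_def by auto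
      ultimately show "x \<in> vecSA ` XSA S A m" by force
    qed
  qed
  have cl: "closed Ks"
    unfolding Ks_def
    by (intro closed_Int closed_INT closed_Collect_all ballI closed_Collect_le closed_Collect_eq cont_nth
        continuous_intros continuous_on_const)
  define M where "M = (\<Sum>c\<in>UNIV. m c)"
  have comp: "\<bar>x $ k\<bar> \<le> M" if x: "x \<in> Ks" for x k
  proof -
    obtain c s a where k: "k = (c, s, a)" by (metis prod.collapse)
    have nn: "\<forall>k. 0 \<le> x $ k" using x by (auto simp: Ks_def)
    show ?thesis
    proof (cases "s \<in> S c \<and> a \<in> Acl S A c")
      case True
      have "x $ (c, s, a) \<le> (\<Sum>a\<in>Acl S A c. x $ (c, s, a))"
        using True nn by (intro member_le_sum) auto
      also have "\<dots> \<le> (\<Sum>s\<in>S c. \<Sum>a\<in>Acl S A c. x $ (c, s, a))"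
        using True nn by (intro member_le_sum[of s "S c" "\<lambda>s. \<Sum>a\<in>Acl S A c. x $ (c, s, a)"] sum_nonneg) auto
      also have "\<dots> = m c" using x by (auto simp: Ks_def)
      also have "\<dots> \<le> M" unfolding M_def using mpos by (intro member_le_sum) (auto simp: less_imp_le)
      finally show ?thesis using nn k by auto
    next
      case False
      then have "x $ k = 0" using x k by (auto simp: Ks_def Bad_def)
      moreover have "0 \<le> M" unfolding M_def using mpos by (intro sum_nonneg) (auto simp: less_imp_le)
      ultimately show ?thesis by simp
    qed
  qed
  have "bounded Ks"
    unfolding bounded_iff
  proof (intro exI ballI)
    fix x assume "x \<in> Ks"
    have "norm x \<le> (\<Sum>i\<in>UNIV. \<bar>x $ i\<bar>)" by (rule norm_le_l1_cart)
    also have "\<dots> \<le> (\<Sum>i\<in>(UNIV::('c \<times> 's \<times> 'a) set). M)" using comp[OF \<open>x \<in> Ks\<close>] by (intro sum_mono) auto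
    finally show "norm x \<le> real CARD('c \<times> 's \<times> 'a) * M" by simp
  qed
  then show ?thesis using cl eq by (simp add: compact_eq_bounded_closed)
qed

lemma A1_unif:
  fixes S :: "'c::finite \<Rightarrow> 's::finite set" and A :: "'c \<Rightarrow> 's \<Rightarrow> 'a::finite set"
  assumes mpos: "\<forall>c. 0 < m c" and A1: "assumption_A1 S A m r"
  shows "(\<forall>e>0. \<exists>d>0. \<forall>c s a \<nu> \<nu>'. s \<in> S c \<longrightarrow> a \<in> Acl S A c \<longrightarrow> \<nu> \<in> XSA S A m \<longrightarrow> \<nu>' \<in> XSA S A m \<longrightarrow>
            Dsq \<nu> \<nu>' < d \<longrightarrow> \<bar>r c s a \<nu> - r c s a \<nu>'\<bar> < e)
       \<and> (\<exists>B. \<forall>c s a \<nu>. s \<in> S c \<longrightarrow> a \<in> Acl S A c \<longrightarrow> \<nu> \<in> XSA S A m \<longrightarrow> \<bar>r c s a \<nu>\<bar> \<le> B)"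
proof -
  let ?K = "vecSA ` XSA S A m"
  have compK: "compact ?K" by (rule XSA_compact[OF mpos])
  have orth: "?K \<subseteq> {x. \<forall>k. 0 \<le> x $ k}" by (auto simp: XSA_def vecSA_def)
  have each: "\<exists>g. (\<forall>\<nu>\<in>XSA S A m. g (vecSA \<nu>) = r c s a \<nu>) \<and> continuous_on ?K g"
    if sa: "s \<in> S c" "a \<in> Acl S A c" for c s a
  proof -
    obtain g g' where g: "\<forall>\<nu>\<in>XSA S A m. g (vecSA \<nu>) = r c s a \<nu>"
      and gd: "\<forall>\<nu>\<in>XSA S A m. (g has_derivative (\<lambda>h. g' (vecSA \<nu>) \<bullet> h)) (at (vecSA \<nu>) within {x. \<forall>k. 0 \<le> x $ k})"
      using A1 sa unfolding assumption_A1_def by blast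
    have "continuous_on ?K g"
      unfolding continuous_on_eq_continuous_within
    proof
      fix x assume "x \<in> ?K"
      then obtain \<nu> where \<nu>: "\<nu> \<in> XSA S A m" "x = vecSA \<nu>" by auto
      have "continuous (at x within {x. \<forall>k. 0 \<le> x $ k}) g"
        using has_derivative_continuous gd \<nu> by blast
      then show "continuous (at x within ?K) g" using orth continuous_within_subset by blast
    qed
    then show ?thesis using g by blast
  qed
  have T: "finite {(c, s, a). s \<in> S c \<and> a \<in> Acl S A c}" by simp
  have part1: "\<exists>d>0. \<forall>c s a \<nu> \<nu>'. s \<in> S c \<longrightarrow> a \<in> Acl S A c \<longrightarrow> \<nu> \<in> XSA S A m \<longrightarrow> \<nu>' \<in> XSA S A m \<longrightarrow>
            Dsq \<nu> \<nu>' < d \<longrightarrow> \<bar>r c s a \<nu> - r c s a \<nu>'\<bar> < e" if e: "e > 0" for e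
  proof -
    define Q where "Q = (\<lambda>t d. \<forall>\<nu> \<nu>'. \<nu> \<in> XSA S A m \<longrightarrow> \<nu>' \<in> XSA S A m \<longrightarrow>
            Dsq \<nu> \<nu>' < d \<longrightarrow> \<bar>r (fst t) (fst (snd t)) (snd (snd t)) \<nu> - r (fst t) (fst (snd t)) (snd (snd t)) \<nu>'\<bar> < e)"
    have ex: "\<exists>d>0. Q t d" if t: "t \<in> {(c, s, a). s \<in> S c \<and> a \<in> Acl S A c}" for t
    proof -
      obtain c s a where tt: "t = (c, s, a)" by (metis prod.collapse)
      have sa: "s \<in> S c" "a \<in> Acl S A c" using t tt by auto
      obtain g where g: "\<forall>\<nu>\<in>XSA S A m. g (vecSA \<nu>) = r c s a \<nu>" and gc: "continuous_on ?K g"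
        using each[OF sa] by blast
      have "uniformly_continuous_on ?K g" by (rule compact_uniformly_continuous[OF gc compK])
      then obtain d where d: "d > 0" and dd: "\<forall>x\<in>?K. \<forall>x'\<in>?K. dist_class.dist x' x < d \<longrightarrow> dist_class.dist (g x') (g x) < e"
        using e unfolding uniformly_continuous_on_def by blast
      have "Q t (d\<^sup>2)" unfolding Q_def tt fst_conv snd_conv
      proof (intro allI impI)
        fix \<nu> \<nu>' assume \<nu>: "\<nu> \<in> XSA S A m" "\<nu>' \<in> XSA S A m" "Dsq \<nu> \<nu>' < d\<^sup>2"
        have "sqrt (Dsq \<nu> \<nu>') < sqrt (d\<^sup>2)" using \<nu>(3) by (simp only: real_sqrt_less_iff)
        then have "sqrt (Dsq \<nu> \<nu>') < d" using d by simp
        then have "dist_class.dist (vecSA \<nu>) (vecSA \<nu>') < d" by (simp only: dist_vecSA)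
        then have "dist_class.dist (g (vecSA \<nu>)) (g (vecSA \<nu>')) < e" using dd \<nu>(1,2) by blast
        then show "\<bar>r c s a \<nu> - r c s a \<nu>'\<bar> < e" using g \<nu>(1,2) by (simp add: dist_real_def)
      qed
      moreover have "0 < d\<^sup>2" using d by simp
      ultimately show ?thesis by blast
    qed
    have mono: "Q t d'" if "0 < d'" "d' \<le> d" "Q t d" for t d d'
      using that unfolding Q_def by (meson less_le_trans not_le)
    obtain d where d: "d > 0" "\<forall>t\<in>{(c, s, a). s \<in> S c \<and> a \<in> Acl S A c}. Q t d"
      using finite_delta[OF T, of Q] ex mono by blast
    show ?thesis
    proof (intro exI[of _ d] conjI allI impI)
      show "0 < d" by (rule d(1))
      fix c s a \<nu> \<nu>' assume h: "s \<in> S c" "a \<in> Acl S A c" "\<nu> \<in> XSA S A m" "\<nu>' \<in> XSA S A m" "Dsq \<nu> \<nu>' < d"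
      have "Q (c, s, a) d" using d(2) h(1,2) by blast
      then show "\<bar>r c s a \<nu> - r c s a \<nu>'\<bar> < e" using h(3-5) unfolding Q_def by simp
    qed
  qed
  have part2: "\<exists>B. \<forall>c s a \<nu>. s \<in> S c \<longrightarrow> a \<in> Acl S A c \<longrightarrow> \<nu> \<in> XSA S A m \<longrightarrow> \<bar>r c s a \<nu>\<bar> \<le> B"
  proof -
    define Q where "Q = (\<lambda>t B. \<forall>\<nu>. \<nu> \<in> XSA S A m \<longrightarrow> \<bar>r (fst t) (fst (snd t)) (snd (snd t)) \<nu>\<bar> \<le> B)"
    have ex: "\<exists>B. Q t B" if t: "t \<in> {(c, s, a). s \<in> S c \<and> a \<in> Acl S A c}" for t
    proof -
      obtain c s a where tt: "t = (c, s, a)" by (metis prod.collapse)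
      have sa: "s \<in> S c" "a \<in> Acl S A c" using t tt by auto
      obtain g where g: "\<forall>\<nu>\<in>XSA S A m. g (vecSA \<nu>) = r c s a \<nu>" and gc: "continuous_on ?K g"
        using each[OF sa] by blast
      have "compact (g ` ?K)" by (rule compact_continuous_image[OF gc compK])
      then have "bounded (g ` ?K)" by (rule compact_imp_bounded)
      then obtain B where B: "\<forall>y\<in>g ` ?K. norm y \<le> B" unfolding bounded_iff by blast
      have "Q t B" unfolding Q_def tt fst_conv snd_conv
      proof (intro allI impI)
        fix \<nu> assume "\<nu> \<in> XSA S A m"
        then have "norm (g (vecSA \<nu>)) \<le> B" using B by blast
        then show "\<bar>r c s a \<nu>\<bar> \<le> B" using g \<open>\<nu> \<in> XSA S A m\<close> by simp
      qed
      then show ?thesis by blast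
    qed
    have mono: "Q t B'" if "B \<le> B'" "Q t B" for t B B'
      using that unfolding Q_def by (meson order_trans)
    obtain B where B: "\<forall>t\<in>{(c, s, a). s \<in> S c \<and> a \<in> Acl S A c}. Q t B"
      using finite_bound[OF T, of Q] ex mono by blast
    show ?thesis
    proof (intro exI[of _ B] allI impI)
      fix c s a \<nu> assume h: "s \<in> S c" "a \<in> Acl S A c" "\<nu> \<in> XSA S A m"
      have "Q (c, s, a) B" using B h(1,2) by blast
      then show "\<bar>r c s a \<nu>\<bar> \<le> B" using h(3) unfolding Q_def by simp
    qed
  qed
  show ?thesis using part1 part2 by blast
qed


lemma est_profile:
  fixes S :: "'c::finite \<Rightarrow> 's::finite set" and A :: "'c \<Rightarrow> 's \<Rightarrow> 'a::finite set"
    and r :: "'c \<Rightarrow> 's \<Rightarrow> 'a \<Rightarrow> ('c \<Rightarrow> 's \<Rightarrow> 'a \<Rightarrow> real) \<Rightarrow> real"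
    and ms :: "'c \<Rightarrow> 's \<Rightarrow> 'a \<Rightarrow> real"
  assumes J: "jchain_eta N cl lam phi p i S et"
    and empX: "\<forall>e. (\<forall>j<N. e j \<in> S (cl j)) \<longrightarrow> emp N cl p e \<in> XSA S A m"
    and msX: "ms \<in> XSA S A m"
    and d: "0 < d" and unif: "\<forall>c s a \<nu> \<nu>'. s \<in> S c \<longrightarrow> a \<in> Acl S A c \<longrightarrow> \<nu> \<in> XSA S A m \<longrightarrow> \<nu>' \<in> XSA S A m \<longrightarrow>
            Dsq \<nu> \<nu>' < d \<longrightarrow> \<bar>r c s a \<nu> - r c s a \<nu>'\<bar> < e1"
    and R: "0 \<le> R" "\<forall>c s a \<nu>. s \<in> S c \<longrightarrow> a \<in> Acl S A c \<longrightarrow> \<nu> \<in> XSA S A m \<longrightarrow> \<bar>r c s a \<nu>\<bar> \<le> R"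
    and pi: "\<forall>t\<in>S (cl i). p i t \<in> Acl S A (cl i)"
    and mean: "\<forall>c s a. \<bar>(\<Sum>j<N. if cl j = c \<and> p j s = a then et j s else 0) / real N - ms c s a\<bar> \<le> \<beta>"
    and init_ok: "\<forall>x\<in>set_pmf init. \<forall>j<N. x j \<in> S (cl j)"
  shows "\<bar>Jpay N cl lam phi r p init i - (\<Sum>t\<in>S (cl i). et i t * r (cl i) t (p i t) ms)\<bar>
         \<le> e1 + (2 * R / d) * (real CARD('c \<times> 's \<times> 'a) * (\<beta>\<^sup>2 + 1 / real N))"
proof -
  interpret jchain_eta N cl lam phi p i S et by (rule J)
  define K where "K = 2 * R / d"
  have K: "0 \<le> K" using R d by (simp add: K_def)
  define D where "D = (\<lambda>e. Dsq (emp N cl p e) ms)"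
  have eE: "\<forall>j<N. e j \<in> S (cl j)" if "e \<in> E" for e using that by (auto simp: E_def PiE_iff)
  have pw: "\<bar>fr r e - r (cl i) (e i) (p i (e i)) ms\<bar> \<le> e1 + K * D e" if e: "e \<in> E" for e
  proof -
    have eiS: "e i \<in> S (cl i)" using eE[OF e] ilt by auto
    have aA: "p i (e i) \<in> Acl S A (cl i)" using pi eiS by auto
    have X: "emp N cl p e \<in> XSA S A m" using empX eE[OF e] by auto
    have Dn: "0 \<le> D e" by (simp add: D_def Dsq_nn)
    show ?thesis
    proof (cases "D e < d")
      case True
      then have "\<bar>fr r e - r (cl i) (e i) (p i (e i)) ms\<bar> < e1"
        using unif eiS aA X msX by (auto simp: fr_def D_def)
      moreover have "0 \<le> K * D e" using K Dn by simp
      ultimately show ?thesis by linarith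
    next
      case False
      have h1: "\<bar>r (cl i) (e i) (p i (e i)) (emp N cl p e)\<bar> \<le> R" using R(2) eiS aA X by blast
      have h2: "\<bar>r (cl i) (e i) (p i (e i)) ms\<bar> \<le> R" using R(2) eiS aA msX by blast
      have "\<bar>fr r e - r (cl i) (e i) (p i (e i)) ms\<bar> \<le> 2 * R"
        using h1 h2 unfolding fr_def abs_le_iff by linarith
      also have "2 * R \<le> K * D e" using False d R(1) by (simp add: K_def field_simps mult_left_mono)
      finally have "\<bar>fr r e - r (cl i) (e i) (p i (e i)) ms\<bar> \<le> K * D e" .
      moreover have "0 \<le> e1"
      proof -
        have "Dsq ms ms = 0" by (simp add: Dsq_def)
        then have "\<bar>r (cl i) (e i) (p i (e i)) ms - r (cl i) (e i) (p i (e i)) ms\<bar> < e1"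
          using unif[rule_format, OF eiS aA msX msX] d by simp
        then show ?thesis by simp
      qed
      ultimately show ?thesis by linarith
    qed
  qed
  have EPD: "EP D \<le> real CARD('c \<times> 's \<times> 'a) * (\<beta>\<^sup>2 + 1 / real N)"
  proof -
    have "EP D = (\<Sum>k\<in>UNIV. EP (\<lambda>e. (emp N cl p e (fst k) (fst (snd k)) (snd (snd k)) - ms (fst k) (fst (snd k)) (snd (snd k)))\<^sup>2))"
      unfolding D_def Dsq_def by (rule EP_sum)
    also have "\<dots> \<le> (\<Sum>k\<in>(UNIV::('c \<times> 's \<times> 'a) set). \<beta>\<^sup>2 + 1 / real N)"
    proof (rule sum_mono)
      fix k :: "'c \<times> 's \<times> 'a"
      obtain c s a where k: "k = (c, s, a)" by (metis prod.collapse)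
      have "(\<Sum>j<N. EP (\<lambda>e. ZZ c s a j (e j))) = (\<Sum>j<N. if cl j = c \<and> p j s = a then et j s else 0)"
        by (intro sum.cong refl) (simp add: EP_ZZ)
      then have "EP (\<lambda>e. (emp N cl p e c s a - ms c s a)\<^sup>2) \<le> ((\<Sum>j<N. if cl j = c \<and> p j s = a then et j s else 0) / real N - ms c s a)\<^sup>2 + 1 / real N"
        using EP_var[of c s a "ms c s a"] by simp
      also have "((\<Sum>j<N. if cl j = c \<and> p j s = a then et j s else 0) / real N - ms c s a)\<^sup>2 \<le> \<beta>\<^sup>2"
        using mean by (meson abs_ge_zero order_trans power2_le_iff_abs_le)
      finally show "EP (\<lambda>e. (emp N cl p e (fst k) (fst (snd k)) (snd (snd k)) - ms (fst k) (fst (snd k)) (snd (snd k)))\<^sup>2) \<le> \<beta>\<^sup>2 + 1 / real N"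
        using k by simp
    qed
    also have "\<dots> = real CARD('c \<times> 's \<times> 'a) * (\<beta>\<^sup>2 + 1 / real N)" by simp
    finally show ?thesis .
  qed
  have "EP (\<lambda>e. r (cl i) (e i) (p i (e i)) ms) = (\<Sum>t\<in>S (cl i). et i t * r (cl i) t (p i t) ms)"
    by (rule EP_coord[OF ilt])
  moreover have "\<bar>EP (fr r) - EP (\<lambda>e. r (cl i) (e i) (p i (e i)) ms)\<bar> \<le> e1 + K * EP D"
  proof -
    have "EP (fr r) - EP (\<lambda>e. r (cl i) (e i) (p i (e i)) ms) = EP (\<lambda>e. fr r e - r (cl i) (e i) (p i (e i)) ms)"
      using EP_lin[of 1 "fr r" "-1" "\<lambda>e. r (cl i) (e i) (p i (e i)) ms"] by simp
    also have "\<bar>\<dots>\<bar> \<le> EP (\<lambda>e. \<bar>fr r e - r (cl i) (e i) (p i (e i)) ms\<bar>)" by (rule EP_abs)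
    also have "\<dots> \<le> EP (\<lambda>e. e1 * 1 + K * D e)" using pw by (intro EP_mono) simp
    also have "\<dots> = e1 + K * EP D" using EP_lin[of e1 "\<lambda>e. 1" K D] EP_const by simp
    finally show ?thesis .
  qed
  moreover have "K * EP D \<le> K * (real CARD('c \<times> 's \<times> 'a) * (\<beta>\<^sup>2 + 1 / real N))"
    using EPD K by (rule mult_left_mono)
  moreover have "Jpay N cl lam phi r p init i = EP (fr r)" using Jpay_PP[OF init_ok] EP_expect by simp
  ultimately show ?thesis unfolding K_def by linarith
qed


lemma Acl_mem: "s \<in> S c \<Longrightarrow> a \<in> A c s \<Longrightarrow> a \<in> Acl S A c"
  by (auto simp: Acl_def)

lemma muSA_XSA:
  fixes S :: "'c::finite \<Rightarrow> 's::finite set" and A :: "'c \<Rightarrow> 's \<Rightarrow> 'a::finite set"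
  assumes mu: "\<mu> \<in> Xset S A m"
  shows "muSA S A \<mu> \<in> XSA S A m"
  unfolding XSA_def
proof (intro CollectI allI conjI impI)
  fix c
  have nn: "\<forall>s u. 0 \<le> \<mu> c s u" and out: "\<forall>s u. (s \<notin> S c \<or> u \<notin> UD S A c) \<longrightarrow> \<mu> c s u = 0"
    and sm: "(\<Sum>s\<in>S c. \<Sum>u\<in>UD S A c. \<mu> c s u) = m c"
    using mu unfolding Xset_def by auto
  show "0 \<le> muSA S A \<mu> c s a" for s a unfolding muSA_def using nn by (intro sum_nonneg) auto
  show "muSA S A \<mu> c s a = 0" if "s \<notin> S c \<or> a \<notin> Acl S A c" for s a
    unfolding muSA_def
  proof (rule sum.neutral, rule ballI)
    fix u assume u: "u \<in> UD S A c"
    show "\<mu> c s u * (if u s = a then 1 else 0) = 0"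
    proof (cases "s \<in> S c")
      case True
      then have "a \<notin> Acl S A c" using that by auto
      moreover have "u s \<in> Acl S A c" by (meson Acl_mem True UD_mem u)
      ultimately show ?thesis by auto
    next
      case False then show ?thesis using out by auto
    qed
  qed
  have "(\<Sum>s\<in>S c. \<Sum>a\<in>Acl S A c. muSA S A \<mu> c s a) = (\<Sum>s\<in>S c. \<Sum>u\<in>UD S A c. \<mu> c s u * (\<Sum>a\<in>Acl S A c. (if u s = a then 1 else 0)))"
  proof (intro sum.cong refl)
    fix s
    show "(\<Sum>a\<in>Acl S A c. muSA S A \<mu> c s a) = (\<Sum>u\<in>UD S A c. \<mu> c s u * (\<Sum>a\<in>Acl S A c. (if u s = a then 1 else 0)))"
      unfolding muSA_def by (subst sum.swap) (simp only: sum_distrib_left)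
  qed
  also have "\<dots> = (\<Sum>s\<in>S c. \<Sum>u\<in>UD S A c. \<mu> c s u)"
  proof (intro sum.cong refl)
    fix s u assume s: "s \<in> S c" and u: "u \<in> UD S A c"
    have "u s \<in> Acl S A c" by (meson Acl_mem s UD_mem u)
    then show "\<mu> c s u * (\<Sum>a\<in>Acl S A c. (if u s = a then 1 else 0)) = \<mu> c s u" by simp
  qed
  finally show "(\<Sum>s\<in>S c. \<Sum>a\<in>Acl S A c. muSA S A \<mu> c s a) = m c" using sm by simp
qed

lemma card_filter_sum: fixes N :: nat shows "real (card {j. j < N \<and> P j}) = (\<Sum>j<N. if P j then 1 else 0)"
proof -
  have "{j. j < N \<and> P j} = {j \<in> {..<N}. P j}" by auto
  then have "real (card {j. j < N \<and> P j}) = (\<Sum>j\<in>{j \<in> {..<N}. P j}. 1)" by simp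
  also have "\<dots> = (\<Sum>j<N. if P j then 1 else 0)" using sum.inter_filter[OF finite_lessThan, of "\<lambda>_. (1::real)" N P] by simp
  finally show ?thesis .
qed

lemma emp_XSA:
  fixes S :: "'c::finite \<Rightarrow> 's::finite set" and A :: "'c \<Rightarrow> 's \<Rightarrow> 'a::finite set"
  assumes N: "0 < N" and cnt: "\<forall>c. real (card {i. i < N \<and> cl i = c}) = real N * m c"
    and q: "\<forall>j<N. q j \<in> UD S A (cl j)" and e: "\<forall>j<N. e j \<in> S (cl j)"
  shows "emp N cl q e \<in> XSA S A m"
  unfolding XSA_def
proof (intro CollectI allI conjI impI)
  fix c
  show "0 \<le> emp N cl q e c s a" for s a by (simp add: emp_def)
  show "emp N cl q e c s a = 0" if "s \<notin> S c \<or> a \<notin> Acl S A c" for s a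
  proof -
    have "{j. j < N \<and> cl j = c \<and> e j = s \<and> q j (e j) = a} = {}"
    proof (rule ccontr)
      assume "{j. j < N \<and> cl j = c \<and> e j = s \<and> q j (e j) = a} \<noteq> {}"
      then obtain j where j: "j < N" "cl j = c" "e j = s" "q j (e j) = a" by auto
      have sS: "s \<in> S c" using e j by auto
      have "a \<in> A c s" using UD_mem[of "q j" S A c s] q j sS by auto
      then have "a \<in> Acl S A c" using sS by (rule Acl_mem[rotated])
      then show False using that sS by auto
    qed
    then show ?thesis by (simp add: emp_def)
  qed
  have inner: "(\<Sum>s\<in>S c. \<Sum>a\<in>Acl S A c. (if cl j = c \<and> e j = s \<and> q j (e j) = a then 1 else 0)) = (if cl j = c then 1 else (0::real))"
    if j: "j < N" for j
  proof (cases "cl j = c")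
    case True
    have sS: "e j \<in> S c" using e j True by auto
    have "q j (e j) \<in> Acl S A c" using UD_mem[of "q j" S A c "e j"] q j True sS by (auto intro: Acl_mem)
    have "(\<Sum>s\<in>S c. \<Sum>a\<in>Acl S A c. (if cl j = c \<and> e j = s \<and> q j (e j) = a then 1 else (0::real)))
        = (\<Sum>s\<in>S c. if e j = s then 1 else 0)"
    proof (intro sum.cong refl)
      fix s assume "s \<in> S c"
      show "(\<Sum>a\<in>Acl S A c. (if cl j = c \<and> e j = s \<and> q j (e j) = a then 1 else (0::real))) = (if e j = s then 1 else 0)"
      proof (cases "e j = s")
        case True
        then show ?thesis using \<open>q j (e j) \<in> Acl S A c\<close> \<open>cl j = c\<close> by (simp add: sum.delta)
      qed simp
    qed
    also have "\<dots> = 1" using sS by (simp add: sum.delta')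
    finally show ?thesis using True by simp
  qed simp
  have "(\<Sum>s\<in>S c. \<Sum>a\<in>Acl S A c. emp N cl q e c s a)
      = (\<Sum>s\<in>S c. \<Sum>a\<in>Acl S A c. \<Sum>j<N. (if cl j = c \<and> e j = s \<and> q j (e j) = a then 1 else 0)) / real N"
    by (simp add: emp_def card_filter_sum sum_divide_distrib)
  also have "(\<Sum>s\<in>S c. \<Sum>a\<in>Acl S A c. \<Sum>j<N. (if cl j = c \<and> e j = s \<and> q j (e j) = a then 1 else 0))
      = (\<Sum>j<N. \<Sum>s\<in>S c. \<Sum>a\<in>Acl S A c. (if cl j = c \<and> e j = s \<and> q j (e j) = a then 1 else (0::real)))"
    by (subst sum.swap, subst (2) sum.swap) (rule refl)
  also have "\<dots> = (\<Sum>j<N. if cl j = c then 1 else 0)" using inner by simp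
  also have "\<dots> = real N * m c" using cnt card_filter_sum[of N "\<lambda>j. cl j = c"] by simp
  finally show "(\<Sum>s\<in>S c. \<Sum>a\<in>Acl S A c. emp N cl q e c s a) = m c" using N by simp
qed

lemma Fval_eq:
  fixes S :: "'c::finite \<Rightarrow> 's::finite set" and A :: "'c \<Rightarrow> 's \<Rightarrow> 'a::finite set"
  assumes u: "u \<in> UD S A c"
  shows "Fval S A phi lam r c u \<mu> = (\<Sum>t\<in>S c. eta S phi lam c u t * r c t (u t) (muSA S A \<mu>))"
  unfolding Fval_def
proof (intro sum.cong refl)
  fix t assume t: "t \<in> S c"
  have "u t \<in> A c t" using UD_mem[OF u t] .
  then show "(\<Sum>a\<in>A c t. eta S phi lam c u t * (if a = u t then 1 else 0) * r c t a (muSA S A \<mu>)) =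
        eta S phi lam c u t * r c t (u t) (muSA S A \<mu>)"
  proof -
    have "(\<Sum>a\<in>A c t. eta S phi lam c u t * (if a = u t then 1 else 0) * r c t a (muSA S A \<mu>))
        = (\<Sum>a\<in>A c t. if a = u t then eta S phi lam c u t * r c t a (muSA S A \<mu>) else 0)"
      by (intro sum.cong refl) auto
    also have "\<dots> = eta S phi lam c u t * r c t (u t) (muSA S A \<mu>)" using \<open>u t \<in> A c t\<close> by (simp add: sum.delta)
    finally show ?thesis .
  qed
qed

lemma group_sum:
  fixes N :: nat and S :: "'c::finite \<Rightarrow> 's::finite set" and A :: "'c \<Rightarrow> 's \<Rightarrow> 'a::finite set"
  assumes q: "\<forall>j<N. q j \<in> UD S A (cl j)"
  shows "(\<Sum>j<N. if cl j = c then G (q j) else (0::real)) = (\<Sum>u\<in>UD S A c. real (card {j. j < N \<and> cl j = c \<and> q j = u}) * G u)"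
proof -
  have fin: "finite (UD S A c)" by (simp add: UD_def finite_PiE)
  have "(\<Sum>j<N. if cl j = c then G (q j) else 0) = (\<Sum>j\<in>{j \<in> {..<N}. cl j = c}. G (q j))"
    by (rule sum.inter_filter[symmetric]) simp
  also have "\<dots> = (\<Sum>u\<in>UD S A c. \<Sum>j\<in>{j' \<in> {j \<in> {..<N}. cl j = c}. q j' = u}. G (q j))"
    by (rule sum.group[symmetric]) (use fin q in auto)
  also have "\<dots> = (\<Sum>u\<in>UD S A c. real (card {j. j < N \<and> cl j = c \<and> q j = u}) * G u)"
  proof (intro sum.cong refl)
    fix u
    have "{j' \<in> {j \<in> {..<N}. cl j = c}. q j' = u} = {j. j < N \<and> cl j = c \<and> q j = u}" by auto
    then show "(\<Sum>j\<in>{j' \<in> {j \<in> {..<N}. cl j = c}. q j' = u}. G (q j)) = real (card {j. j < N \<and> cl j = c \<and> q j = u}) * G u"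
      by simp
  qed
  finally show ?thesis .
qed


theorem theorem2:
  fixes S :: "'c::finite \<Rightarrow> 's::finite set"
    and A :: "'c \<Rightarrow> 's \<Rightarrow> 'a::finite set"
    and phi :: "'c \<Rightarrow> 's \<Rightarrow> 'a \<Rightarrow> 's pmf"
    and lam m :: "'c \<Rightarrow> real"
    and r :: "'c \<Rightarrow> 's \<Rightarrow> 'a \<Rightarrow> ('c \<Rightarrow> 's \<Rightarrow> 'a \<Rightarrow> real) \<Rightarrow> real"
    and \<mu> :: "'c \<Rightarrow> 's \<Rightarrow> ('s \<Rightarrow> 'a) \<Rightarrow> real"
  assumes mass_pos: "\<forall>c. 0 < m c"
    and rate_pos: "\<forall>c. 0 < lam c"
    and actions_ne: "\<forall>c. \<forall>s\<in>S c. A c s \<noteq> {}"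
    and kernel: "\<forall>c. \<forall>s\<in>S c. \<forall>a\<in>A c s. set_pmf (phi c s a) \<subseteq> S c"
    and A1: "assumption_A1 S A m r"
    and A2: "assumption_A2 S A phi"
    and eq: "MSNE S A phi lam m r \<mu>"
  shows "\<forall>\<epsilon>>0. \<exists>N\<epsilon>::nat. \<forall>N>N\<epsilon>. \<forall>(cl :: nat \<Rightarrow> 'c) (p :: nat \<Rightarrow> 's \<Rightarrow> 'a) (init :: (nat \<Rightarrow> 's) pmf).
           (\<forall>c. real (card {i. i < N \<and> cl i = c}) = real N * m c) \<longrightarrow>
           (\<forall>i<N. p i \<in> UD S A (cl i)) \<longrightarrow>
           (\<forall>x\<in>set_pmf init. \<forall>i<N. x i \<in> S (cl i)) \<longrightarrow>
           (\<forall>c. \<forall>u\<in>UD S A c.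
              \<bar>real (card {i. i < N \<and> cl i = c \<and> p i = u}) / real N - mass S \<mu> c u\<bar> < 1 / real N) \<longrightarrow>
           (\<forall>i<N. \<forall>v\<in>UD S A (cl i).
              Jpay N cl lam phi r p init i \<ge> Jpay N cl lam phi r (p(i := v)) init i - \<epsilon>)"
proof -
  have finS: "\<forall>c. finite (S c)" by simp
  have mu: "\<mu> \<in> Xset S A m" and msne: "\<forall>c. \<forall>u\<in>UD S A c.
        (0 < mass S \<mu> c u \<longrightarrow> (\<forall>v\<in>UD S A c. Fval S A phi lam r c u \<mu> \<ge> Fval S A phi lam r c v \<mu>)) \<and>
        (\<forall>s\<in>S c. \<mu> c s u = eta S phi lam c u s * mass S \<mu> c u)"
    using eq unfolding MSNE_def by auto
  have Sne: "S c \<noteq> {}" for c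
  proof
    assume "S c = {}"
    moreover have "(\<Sum>s\<in>S c. \<Sum>u\<in>UD S A c. \<mu> c s u) = m c" using mu unfolding Xset_def by blast
    ultimately have "m c = 0" by simp
    then show False using mass_pos by (metis less_irrefl)
  qed
  have eta_st: "statv (S c) (\<lambda>s. phi c s (u s)) (eta S phi lam c u)" if "u \<in> UD S A c" for c u
    by (rule eta_stat[OF kernel that _ A2 Sne]) (use rate_pos in auto)
  have eta_reach: "\<exists>z\<in>S c. \<forall>s\<in>S c. (s, z) \<in> (step_rel S phi c u)\<^sup>*" if "u \<in> UD S A c" for c u
    by (rule reach_single[OF kernel that _ A2 Sne]) simp
  have eta_01: "0 \<le> eta S phi lam c u s \<and> eta S phi lam c u s \<le> 1" if u: "u \<in> UD S A c" for c u s
  proof -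
    have pv: "probv (S c) (eta S phi lam c u)" using eta_st[OF u] by (simp add: statv_def)
    then have nn: "\<forall>x. 0 \<le> eta S phi lam c u x" by (simp add: probv_def)
    have "eta S phi lam c u s \<le> 1"
    proof (cases "s \<in> S c")
      case True
      have "eta S phi lam c u s \<le> sum (eta S phi lam c u) (S c)" using True nn by (intro member_le_sum) auto
      then show ?thesis using pv by (simp add: probv_def)
    next
      case False then show ?thesis using pv by (simp add: probv_def)
    qed
    then show ?thesis using nn by simp
  qed
  have eta_out: "eta S phi lam c u s = 0" if "u \<in> UD S A c" "s \<notin> S c" for c u s
    using eta_st[OF that(1)] that(2) by (simp add: statv_def probv_def)
  define ms where "ms = muSA S A \<mu>"
  have msX: "ms \<in> XSA S A m" unfolding ms_def by (rule muSA_XSA[OF mu])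
  have A1u: "(\<forall>e>0. \<exists>d>0. \<forall>c s a \<nu> \<nu>'. s \<in> S c \<longrightarrow> a \<in> Acl S A c \<longrightarrow> \<nu> \<in> XSA S A m \<longrightarrow> \<nu>' \<in> XSA S A m \<longrightarrow>
            Dsq \<nu> \<nu>' < d \<longrightarrow> \<bar>r c s a \<nu> - r c s a \<nu>'\<bar> < e)
       \<and> (\<exists>B. \<forall>c s a \<nu>. s \<in> S c \<longrightarrow> a \<in> Acl S A c \<longrightarrow> \<nu> \<in> XSA S A m \<longrightarrow> \<bar>r c s a \<nu>\<bar> \<le> B)"
    by (rule A1_unif[OF mass_pos A1])
  then obtain B where B: "\<forall>c s a \<nu>. s \<in> S c \<longrightarrow> a \<in> Acl S A c \<longrightarrow> \<nu> \<in> XSA S A m \<longrightarrow> \<bar>r c s a \<nu>\<bar> \<le> B" by blast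
  define R where "R = max B 0"
  have R: "0 \<le> R" "\<forall>c s a \<nu>. s \<in> S c \<longrightarrow> a \<in> Acl S A c \<longrightarrow> \<nu> \<in> XSA S A m \<longrightarrow> \<bar>r c s a \<nu>\<bar> \<le> R"
    using B by (auto simp: R_def intro: le_max_iff_disj[THEN iffD2])
  define U where "U = (\<Sum>c\<in>UNIV. real (card (UD S A c)))"
  have U: "real (card (UD S A c)) \<le> U" for c unfolding U_def by (intro member_le_sum) auto
  have U0: "0 \<le> U" unfolding U_def by (intro sum_nonneg) auto
  define CI where "CI = real CARD('c \<times> 's \<times> 'a)"
  have CI0: "0 \<le> CI" by (simp add: CI_def)
  show ?thesis
  proof (intro allI impI)
    fix \<epsilon> :: real assume \<epsilon>: "0 < \<epsilon>"
    obtain d where d: "0 < d" and unif: "\<forall>c s a \<nu> \<nu>'. s \<in> S c \<longrightarrow> a \<in> Acl S A c \<longrightarrow> \<nu> \<in> XSA S A m \<longrightarrow> \<nu>' \<in> XSA S A m \<longrightarrow>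
            Dsq \<nu> \<nu>' < d \<longrightarrow> \<bar>r c s a \<nu> - r c s a \<nu>'\<bar> < \<epsilon> / 4"
      using conjunct1[OF A1u, rule_format, of "\<epsilon> / 4"] \<epsilon> by auto
    define KK where "KK = 2 * R / d * (CI * ((U + 1)\<^sup>2 + 1))"
    have KK0: "0 \<le> KK" unfolding KK_def using R(1) d CI0 by (intro mult_nonneg_nonneg) auto
    define N0 where "N0 = nat \<lceil>4 * KK / \<epsilon>\<rceil>"
    show "\<exists>N\<epsilon>::nat. \<forall>N>N\<epsilon>. \<forall>(cl :: nat \<Rightarrow> 'c) (p :: nat \<Rightarrow> 's \<Rightarrow> 'a) (init :: (nat \<Rightarrow> 's) pmf).
           (\<forall>c. real (card {i. i < N \<and> cl i = c}) = real N * m c) \<longrightarrow>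
           (\<forall>i<N. p i \<in> UD S A (cl i)) \<longrightarrow>
           (\<forall>x\<in>set_pmf init. \<forall>i<N. x i \<in> S (cl i)) \<longrightarrow>
           (\<forall>c. \<forall>u\<in>UD S A c.
              \<bar>real (card {i. i < N \<and> cl i = c \<and> p i = u}) / real N - mass S \<mu> c u\<bar> < 1 / real N) \<longrightarrow>
           (\<forall>i<N. \<forall>v\<in>UD S A (cl i).
              Jpay N cl lam phi r p init i \<ge> Jpay N cl lam phi r (p(i := v)) init i - \<epsilon>)"
    proof (intro exI[of _ N0] allI impI ballI)
      fix N :: nat and cl :: "nat \<Rightarrow> 'c" and p :: "nat \<Rightarrow> 's \<Rightarrow> 'a" and init :: "(nat \<Rightarrow> 's) pmf"
      fix i v
      assume NN: "N0 < N"
        and H1: "\<forall>c. real (card {i. i < N \<and> cl i = c}) = real N * m c"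
        and H2: "\<forall>i<N. p i \<in> UD S A (cl i)"
        and H3: "\<forall>x\<in>set_pmf init. \<forall>i<N. x i \<in> S (cl i)"
        and H4: "\<forall>c. \<forall>u\<in>UD S A c. \<bar>real (card {i. i < N \<and> cl i = c \<and> p i = u}) / real N - mass S \<mu> c u\<bar> < 1 / real N"
        and iN: "i < N" and v: "v \<in> UD S A (cl i)"
      have Npos: "0 < N" using NN by simp
      have NposR: "0 < real N" using Npos by simp
      have KKN: "KK / real N < \<epsilon> / 4"
      proof -
        have "4 * KK / \<epsilon> \<le> real N0" unfolding N0_def by linarith
        also have "\<dots> < real N" using NN by simp
        finally have "4 * KK < real N * \<epsilon>" using \<epsilon> by (simp add: field_simps)
        then show ?thesis using NposR by (simp add: field_simps)
      qed
      define p' where "p' = p(i := v)"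
      have H2': "\<forall>j<N. p' j \<in> UD S A (cl j)" using H2 v by (auto simp: p'_def)
      have est: "\<bar>Jpay N cl lam phi r q init i - Fval S A phi lam r (cl i) (q i) \<mu>\<bar> \<le> \<epsilon> / 4 + KK / real N"
        if q: "\<forall>j<N. q j \<in> UD S A (cl j)"
          and mq: "\<forall>c s a. \<bar>(\<Sum>j<N. if cl j = c \<and> q j s = a then eta S phi lam (cl j) (q j) s else 0) / real N - ms c s a\<bar> \<le> (U + 1) / real N"
        for q
      proof -
        have J: "jchain_eta N cl lam phi q i S (\<lambda>j. eta S phi lam (cl j) (q j))"
        proof (unfold_locales)
          show "0 < N" by (rule Npos)
          show "i < N" by (rule iN)
          show "\<forall>c. 0 < lam c" by (rule rate_pos)
          show "\<forall>j<N. \<forall>s\<in>S (cl j). set_pmf (phi (cl j) s (q j s)) \<subseteq> S (cl j)"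
          proof (intro allI impI ballI)
            fix j s assume j: "j < N" and sS: "s \<in> S (cl j)"
            have "q j s \<in> A (cl j) s" using UD_mem[of "q j" S A "cl j" s] q j sS by blast
            then show "set_pmf (phi (cl j) s (q j s)) \<subseteq> S (cl j)" using kernel sS by blast
          qed
          show "\<forall>c. finite (S c)" by simp
          show "\<forall>j<N. statv (S (cl j)) (\<lambda>s. phi (cl j) s (q j s)) (eta S phi lam (cl j) (q j))"
            using q eta_st by blast
          show "\<forall>j<N. \<exists>z\<in>S (cl j). \<forall>s\<in>S (cl j). (s, z) \<in> (step_rel S phi (cl j) (q j))\<^sup>*"
            using q eta_reach by blast
        qed
        have empX: "\<forall>e. (\<forall>j<N. e j \<in> S (cl j)) \<longrightarrow> emp N cl q e \<in> XSA S A m"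
          using emp_XSA[OF Npos H1 q] by blast
        have pi: "\<forall>t\<in>S (cl i). q i t \<in> Acl S A (cl i)"
        proof
          fix t assume t: "t \<in> S (cl i)"
          have "q i t \<in> A (cl i) t" using UD_mem[of "q i" S A "cl i" t] q iN t by blast
          then show "q i t \<in> Acl S A (cl i)" using t by (rule Acl_mem[rotated])
        qed
        have "\<bar>Jpay N cl lam phi r q init i - (\<Sum>t\<in>S (cl i). eta S phi lam (cl (i)) (q i) t * r (cl i) t (q i t) ms)\<bar>
            \<le> \<epsilon> / 4 + (2 * R / d) * (real CARD('c \<times> 's \<times> 'a) * (((U + 1) / real N)\<^sup>2 + 1 / real N))"
          using est_profile[OF J empX msX d unif R pi mq H3] by simp
        moreover have "(\<Sum>t\<in>S (cl i). eta S phi lam (cl (i)) (q i) t * r (cl i) t (q i t) ms) = Fval S A phi lam r (cl i) (q i) \<mu>"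
          using Fval_eq[of "q i" S A "cl i" phi lam r \<mu>] q iN by (simp add: ms_def)
        moreover have "(2 * R / d) * (real CARD('c \<times> 's \<times> 'a) * (((U + 1) / real N)\<^sup>2 + 1 / real N)) \<le> KK / real N"
        proof -
          have "((U + 1) / real N)\<^sup>2 = (U + 1)\<^sup>2 / real N / real N" by (simp add: power2_eq_square field_simps)
          also have "\<dots> \<le> (U + 1)\<^sup>2 / real N / 1"
            by (rule divide_left_mono) (use Npos in auto)
          finally have "((U + 1) / real N)\<^sup>2 + 1 / real N \<le> ((U + 1)\<^sup>2 + 1) / real N" by (simp add: add_divide_distrib)
          then have "CI * (((U + 1) / real N)\<^sup>2 + 1 / real N) \<le> CI * (((U + 1)\<^sup>2 + 1) / real N)"
            using CI0 by (rule mult_left_mono)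
          moreover have "0 \<le> 2 * R / d" using R(1) d by simp
          ultimately have "(2 * R / d) * (CI * (((U + 1) / real N)\<^sup>2 + 1 / real N)) \<le> (2 * R / d) * (CI * (((U + 1)\<^sup>2 + 1) / real N))"
            by (rule mult_left_mono)
          then show ?thesis by (simp add: KK_def CI_def)
        qed
        ultimately show ?thesis by linarith
      qed
      define G where "G = (\<lambda>c s a u. if u s = a then eta S phi lam c u s else 0)"
      have G01: "0 \<le> G c s a u \<and> G c s a u \<le> 1" if "u \<in> UD S A c" for c s a u
        using eta_01[OF that, of s] by (auto simp: G_def)
      have msG: "ms c s a = (\<Sum>u\<in>UD S A c. mass S \<mu> c u * G c s a u)" for c s a
        unfolding ms_def muSA_def
      proof (intro sum.cong refl)
        fix u assume u: "u \<in> UD S A c"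
        show "\<mu> c s u * (if u s = a then 1 else 0) = mass S \<mu> c u * G c s a u"
        proof (cases "s \<in> S c")
          case True then show ?thesis using msne u by (auto simp: G_def)
        next
          case False
          then have "\<mu> c s u = 0" using mu unfolding Xset_def by auto
          then show ?thesis using eta_out[OF u False] by (simp add: G_def)
        qed
      qed
      have gq: "(\<Sum>j<N. if cl j = c \<and> q j s = a then eta S phi lam (cl j) (q j) s else 0)
          = (\<Sum>u\<in>UD S A c. real (card {j. j < N \<and> cl j = c \<and> q j = u}) * G c s a u)"
        if q: "\<forall>j<N. q j \<in> UD S A (cl j)" for q c s a
      proof -
        have "(\<Sum>j<N. if cl j = c \<and> q j s = a then eta S phi lam (cl j) (q j) s else 0) = (\<Sum>j<N. if cl j = c then G c s a (q j) else 0)"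
          by (intro sum.cong refl) (auto simp: G_def)
        also have "\<dots> = (\<Sum>u\<in>UD S A c. real (card {j. j < N \<and> cl j = c \<and> q j = u}) * G c s a u)"
          by (rule group_sum[OF q])
        finally show ?thesis .
      qed
      have mb1: "\<bar>(\<Sum>j<N. if cl j = c \<and> p j s = a then eta S phi lam (cl j) (p j) s else 0) / real N - ms c s a\<bar> \<le> U / real N" for c s a
      proof -
        have "(\<Sum>j<N. if cl j = c \<and> p j s = a then eta S phi lam (cl j) (p j) s else 0) / real N - ms c s a
            = (\<Sum>u\<in>UD S A c. (real (card {j. j < N \<and> cl j = c \<and> p j = u}) / real N - mass S \<mu> c u) * G c s a u)"
          unfolding gq[OF H2] msG by (simp add: sum_divide_distrib sum_subtractf left_diff_distrib)
        also have "\<bar>\<dots>\<bar> \<le> (\<Sum>u\<in>UD S A c. \<bar>(real (card {j. j < N \<and> cl j = c \<and> p j = u}) / real N - mass S \<mu> c u) * G c s a u\<bar>)"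
          by (rule sum_abs)
        also have "\<dots> \<le> (\<Sum>u\<in>UD S A c. 1 / real N)"
        proof (rule sum_mono)
          fix u assume u: "u \<in> UD S A c"
          have "\<bar>(real (card {j. j < N \<and> cl j = c \<and> p j = u}) / real N - mass S \<mu> c u) * G c s a u\<bar>
              = \<bar>real (card {j. j < N \<and> cl j = c \<and> p j = u}) / real N - mass S \<mu> c u\<bar> * G c s a u"
            using G01[OF u] by (simp add: abs_mult)
          also have "\<dots> \<le> (1 / real N) * 1"
          proof (rule mult_mono)
            show "\<bar>real (card {j. j < N \<and> cl j = c \<and> p j = u}) / real N - mass S \<mu> c u\<bar> \<le> 1 / real N"
              using H4 u less_imp_le by blast
          qed (use G01[OF u] in auto)
          finally show "\<bar>(real (card {j. j < N \<and> cl j = c \<and> p j = u}) / real N - mass S \<mu> c u) * G c s a u\<bar> \<le> 1 / real N" by simp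
        qed
        also have "\<dots> = real (card (UD S A c)) / real N" by simp
        also have "\<dots> \<le> U / real N" using U[of c] NposR by (simp add: divide_right_mono)
        finally show ?thesis .
      qed
      have mb1': "\<forall>c s a. \<bar>(\<Sum>j<N. if cl j = c \<and> p j s = a then eta S phi lam (cl j) (p j) s else 0) / real N - ms c s a\<bar> \<le> (U + 1) / real N"
      proof (intro allI)
        fix c s a
        have "U / real N \<le> (U + 1) / real N" using NposR by (simp add: divide_right_mono)
        then show "\<bar>(\<Sum>j<N. if cl j = c \<and> p j s = a then eta S phi lam (cl j) (p j) s else 0) / real N - ms c s a\<bar> \<le> (U + 1) / real N"
          using mb1[of c s a] by linarith
      qed
      have mb2: "\<forall>c s a. \<bar>(\<Sum>j<N. if cl j = c \<and> p' j s = a then eta S phi lam (cl j) (p' j) s else 0) / real N - ms c s a\<bar> \<le> (U + 1) / real N"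
      proof (intro allI)
        fix c s a
        define g where "g = (\<lambda>q j. if cl j = c \<and> q j s = a then eta S phi lam (cl j) (q j) s else 0)"
        have g01: "0 \<le> g q j \<and> g q j \<le> 1" if "q j \<in> UD S A (cl j)" for q j
          using eta_01[OF that, of s] by (auto simp: g_def)
        have iN': "i \<in> {..<N}" using iN by simp
        have "(\<Sum>j<N. g p' j) - (\<Sum>j<N. g p j) = g p' i - g p i"
        proof -
          have "(\<Sum>j\<in>{..<N} - {i}. g p' j) = (\<Sum>j\<in>{..<N} - {i}. g p j)"
            by (intro sum.cong refl) (auto simp: g_def p'_def)
          then show ?thesis
            using sum.remove[OF finite_lessThan iN', of "g p'"] sum.remove[OF finite_lessThan iN', of "g p"]
            by linarith
        qed
        moreover have "0 \<le> g p' i \<and> g p' i \<le> 1" using g01 H2' iN by blast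
        moreover have "0 \<le> g p i \<and> g p i \<le> 1" using g01 H2 iN by blast
        ultimately have dd: "\<bar>(\<Sum>j<N. g p' j) - (\<Sum>j<N. g p j)\<bar> \<le> 1" by linarith
        have dif: "\<bar>(\<Sum>j<N. g p' j) / real N - (\<Sum>j<N. g p j) / real N\<bar> \<le> 1 / real N"
        proof -
          have "\<bar>(\<Sum>j<N. g p' j) / real N - (\<Sum>j<N. g p j) / real N\<bar> = \<bar>(\<Sum>j<N. g p' j) - (\<Sum>j<N. g p j)\<bar> / real N"
            using NposR by (simp add: diff_divide_distrib[symmetric])
          also have "\<dots> \<le> 1 / real N" using dd NposR by (rule divide_right_mono[OF _ less_imp_le])
          finally show ?thesis .
        qed
        have "\<bar>(\<Sum>j<N. g p j) / real N - ms c s a\<bar> \<le> U / real N" using mb1 by (simp add: g_def)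
        with dif have "\<bar>(\<Sum>j<N. g p' j) / real N - ms c s a\<bar> \<le> U / real N + 1 / real N" by linarith
        moreover have "(\<Sum>j<N. g p' j) = (\<Sum>j<N. if cl j = c \<and> p' j s = a then eta S phi lam (cl j) (p' j) s else 0)"
          by (simp add: g_def)
        moreover have "(U + 1) / real N = U / real N + 1 / real N" by (simp add: add_divide_distrib)
        ultimately show "\<bar>(\<Sum>j<N. if cl j = c \<and> p' j s = a then eta S phi lam (cl j) (p' j) s else 0) / real N - ms c s a\<bar> \<le> (U + 1) / real N"
          by simp
      qed
      have E1: "\<bar>Jpay N cl lam phi r p init i - Fval S A phi lam r (cl i) (p i) \<mu>\<bar> \<le> \<epsilon> / 4 + KK / real N"
        by (rule est[OF H2 mb1'])
      have E2: "\<bar>Jpay N cl lam phi r p' init i - Fval S A phi lam r (cl i) (p' i) \<mu>\<bar> \<le> \<epsilon> / 4 + KK / real N"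
        by (rule est[OF H2' mb2])
      have p'i: "p' i = v" by (simp add: p'_def)
      have massp: "0 < mass S \<mu> (cl i) (p i)"
      proof -
        have "i \<in> {j. j < N \<and> cl j = cl i \<and> p j = p i}" using iN by simp
        then have "1 \<le> card {j. j < N \<and> cl j = cl i \<and> p j = p i}"
        proof -
          have fin: "finite {j. j < N \<and> cl j = cl i \<and> p j = p i}" by simp
          have "card {j. j < N \<and> cl j = cl i \<and> p j = p i} \<noteq> 0" using fin \<open>i \<in> _\<close> by auto
          then show ?thesis by (metis One_nat_def Suc_leI neq0_conv)
        qed
        then have "1 / real N \<le> real (card {j. j < N \<and> cl j = cl i \<and> p j = p i}) / real N"
          using NposR by (simp add: divide_right_mono)
        moreover have "\<bar>real (card {j. j < N \<and> cl j = cl i \<and> p j = p i}) / real N - mass S \<mu> (cl i) (p i)\<bar> < 1 / real N"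
          using H4 H2 iN by blast
        ultimately show ?thesis by linarith
      qed
      have Fge: "Fval S A phi lam r (cl i) (p i) \<mu> \<ge> Fval S A phi lam r (cl i) v \<mu>"
      proof -
        have pUD: "p i \<in> UD S A (cl i)" using H2 iN by blast
        have m1: "0 < mass S \<mu> (cl i) (p i) \<longrightarrow> (\<forall>v\<in>UD S A (cl i). Fval S A phi lam r (cl i) (p i) \<mu> \<ge> Fval S A phi lam r (cl i) v \<mu>)"
          using msne[rule_format, OF pUD] by (rule conjunct1)
        show ?thesis using m1 massp v by blast
      qed
      show "Jpay N cl lam phi r p init i \<ge> Jpay N cl lam phi r (p(i := v)) init i - \<epsilon>"
      proof -
        have E2': "\<bar>Jpay N cl lam phi r (p(i := v)) init i - Fval S A phi lam r (cl i) v \<mu>\<bar> \<le> \<epsilon> / 4 + KK / real N"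
          using E2 unfolding p'i unfolding p'_def .
        show ?thesis using E1 E2' Fge KKN unfolding abs_le_iff by linarith
      qed
    qed
  qed
qed


end
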